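(* Let $G\rightrightarrows G_0$ be a Lie groupoid with quotient map $\pi:G_0\to G_0/G$, and $U\subseteq G_0$ open. Then the map $U/G|_U\to G_0/G$ induced by the inclusion $U\hookrightarrow G_0$, where $U/G|_U$ carries the quotient diffeology from $U$ and $G_0/G$ the quotient diffeology from $G_0$, is a diffeomorphism onto its image $\pi(U)$ equipped with the subset diffeology from $G_0/G$. In particular, if a Lie group $\Gamma$ acts smoothly on a manifold $M$ with quotient map $\pi:M\to M/\Gamma$ and $V\subseteq M$ is open, then the quotient diffeology on $\pi(V)$ induced from $V$ coincides with the subset diffeology induced from $M/\Gamma$.
   Context: Lie groupoids: Hausdorff second-countable base, possibly non-Hausdorff arrow manifold, smooth structure maps, source a submersion with Hausdorff fibres; $G|_U$ is the groupoid of arrows with source and target in $U$; $G_0/G$ is the quotient by $x\sim y$ iff there is an arrow $x\to y$. Diffeology: the quotient diffeology on $X/\mathcal R$ consists of maps from open subsets of Cartesian spaces that locally lift to plots of $X$; the subset diffeology on $S\subseteq X$ consists of maps whose composite with the inclusion is a plot. *)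

theory Defs
  imports "HOL-Analysis.Analysis"
begin

text \<open>ck k S f: f is k times continuously differentiable on the open set S
  (via iterated directional derivatives, which is equivalent to C^k in finite dimension).\<close>
fun ck :: "nat \<Rightarrow> ('a::euclidean_space) set \<Rightarrow> ('a \<Rightarrow> 'b::real_normed_vector) \<Rightarrow> bool" where
  "ck 0 S f = continuous_on S f"
| "ck (Suc k) S f =
     ((\<forall>x\<in>S. f differentiable (at x)) \<and>
      (\<forall>v. ck k S (\<lambda>x. frechet_derivative f (at x) v)))"

definition smooth_on :: "('a::euclidean_space) set \<Rightarrow> ('a \<Rightarrow> 'b::real_normed_vector) \<Rightarrow> bool" where
  "smooth_on S f \<longleftrightarrow> (\<forall>k. ck k S f)"

definition smooth_manifold ::
  "'a topology \<Rightarrow> ('a set \<times> ('a \<Rightarrow> 'm::euclidean_space)) set \<Rightarrow> bool" where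
  "smooth_manifold X A \<longleftrightarrow>
     (\<forall>(W,\<phi>)\<in>A. openin X W \<and> open (\<phi> ` W) \<and>
                 homeomorphic_map (subtopology X W) (top_of_set (\<phi> ` W)) \<phi>) \<and>
     (\<forall>x\<in>topspace X. \<exists>(W,\<phi>)\<in>A. x \<in> W) \<and>
     (\<forall>(W1,\<phi>1)\<in>A. \<forall>(W2,\<phi>2)\<in>A.
        smooth_on (\<phi>1 ` (W1 \<inter> W2)) (\<phi>2 \<circ> inv_into W1 \<phi>1))"

definition smooth_map_on ::
  "'a topology \<Rightarrow> ('a set \<times> ('a \<Rightarrow> 'm::euclidean_space)) set \<Rightarrow>
   'b topology \<Rightarrow> ('b set \<times> ('b \<Rightarrow> 'n::euclidean_space)) set \<Rightarrow>
   'a set \<Rightarrow> ('a \<Rightarrow> 'b) \<Rightarrow> bool" where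
  "smooth_map_on X A Y B D f \<longleftrightarrow>
     openin X D \<and> f ` D \<subseteq> topspace Y \<and> continuous_map (subtopology X D) Y f \<and>
     (\<forall>(W,\<phi>)\<in>A. \<forall>(V,\<psi>)\<in>B.
        smooth_on (\<phi> ` (W \<inter> D \<inter> f -` V)) (\<psi> \<circ> f \<circ> inv_into W \<phi>))"

definition smooth_map ::
  "'a topology \<Rightarrow> ('a set \<times> ('a \<Rightarrow> 'm::euclidean_space)) set \<Rightarrow>
   'b topology \<Rightarrow> ('b set \<times> ('b \<Rightarrow> 'n::euclidean_space)) set \<Rightarrow>
   ('a \<Rightarrow> 'b) \<Rightarrow> bool" where
  "smooth_map X A Y B f \<longleftrightarrow> smooth_map_on X A Y B (topspace X) f"

text \<open>Smooth map defined on an arbitrary subset S (used for the embedded submanifold of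
  composable pairs): locally the restriction of a smooth map defined on an open set.\<close>
definition smooth_map_subset ::
  "'a topology \<Rightarrow> ('a set \<times> ('a \<Rightarrow> 'm::euclidean_space)) set \<Rightarrow>
   'b topology \<Rightarrow> ('b set \<times> ('b \<Rightarrow> 'n::euclidean_space)) set \<Rightarrow>
   'a set \<Rightarrow> ('a \<Rightarrow> 'b) \<Rightarrow> bool" where
  "smooth_map_subset X A Y B S f \<longleftrightarrow>
     S \<subseteq> topspace X \<and> f ` S \<subseteq> topspace Y \<and>
     (\<forall>x\<in>S. \<exists>D F. x \<in> D \<and> smooth_map_on X A Y B D F \<and> (\<forall>y\<in>S \<inter> D. F y = f y))"

definition submersion ::
  "'a topology \<Rightarrow> ('a set \<times> ('a \<Rightarrow> 'm::euclidean_space)) set \<Rightarrow>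
   'b topology \<Rightarrow> ('b set \<times> ('b \<Rightarrow> 'n::euclidean_space)) set \<Rightarrow>
   ('a \<Rightarrow> 'b) \<Rightarrow> bool" where
  "submersion X A Y B f \<longleftrightarrow> smooth_map X A Y B f \<and>
     (\<forall>x\<in>topspace X. \<forall>(W,\<phi>)\<in>A. \<forall>(V,\<psi>)\<in>B. x \<in> W \<longrightarrow> f x \<in> V \<longrightarrow>
        range (frechet_derivative (\<psi> \<circ> f \<circ> inv_into W \<phi>) (at (\<phi> x))) = UNIV)"

definition prod_atlas ::
  "('a set \<times> ('a \<Rightarrow> 'm::euclidean_space)) set \<Rightarrow> ('b set \<times> ('b \<Rightarrow> 'n::euclidean_space)) set \<Rightarrow>
   (('a \<times> 'b) set \<times> ('a \<times> 'b \<Rightarrow> 'm \<times> 'n)) set" where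
  "prod_atlas A B = {(W \<times> V, \<lambda>(a,b). (\<phi> a, \<psi> b)) | W \<phi> V \<psi>. (W,\<phi>) \<in> A \<and> (V,\<psi>) \<in> B}"

text \<open>Arrows g go from s g to t g; m g h (= g \<circ> h) is defined when s g = t h;
  u is the unit map and i the inverse.\<close>
definition lie_groupoid ::
  "'g topology \<Rightarrow> ('g set \<times> ('g \<Rightarrow> 'c::euclidean_space)) set \<Rightarrow>
   'o topology \<Rightarrow> ('o set \<times> ('o \<Rightarrow> 'b::euclidean_space)) set \<Rightarrow>
   ('g \<Rightarrow> 'o) \<Rightarrow> ('g \<Rightarrow> 'o) \<Rightarrow> ('g \<Rightarrow> 'g \<Rightarrow> 'g) \<Rightarrow> ('o \<Rightarrow> 'g) \<Rightarrow> ('g \<Rightarrow> 'g) \<Rightarrow> bool" where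
  "lie_groupoid G AG G0 A0 s t m u i \<longleftrightarrow>
     smooth_manifold G AG \<and> smooth_manifold G0 A0 \<and>
     Hausdorff_space G0 \<and> second_countable G0 \<and>
     \<comment> \<open>groupoid axioms\<close>
     (\<forall>g\<in>topspace G. s g \<in> topspace G0 \<and> t g \<in> topspace G0 \<and> i g \<in> topspace G) \<and>
     (\<forall>x\<in>topspace G0. u x \<in> topspace G \<and> s (u x) = x \<and> t (u x) = x) \<and>
     (\<forall>g\<in>topspace G. \<forall>h\<in>topspace G. s g = t h \<longrightarrow>
        m g h \<in> topspace G \<and> s (m g h) = s h \<and> t (m g h) = t g) \<and>
     (\<forall>g\<in>topspace G. \<forall>h\<in>topspace G. \<forall>k\<in>topspace G. s g = t h \<longrightarrow> s h = t k \<longrightarrow>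
        m (m g h) k = m g (m h k)) \<and>
     (\<forall>g\<in>topspace G. m (u (t g)) g = g \<and> m g (u (s g)) = g) \<and>
     (\<forall>g\<in>topspace G. s (i g) = t g \<and> t (i g) = s g \<and>
        m (i g) g = u (s g) \<and> m g (i g) = u (t g)) \<and>
     \<comment> \<open>smoothness of the structure maps\<close>
     submersion G AG G0 A0 s \<and> smooth_map G AG G0 A0 t \<and>
     smooth_map G0 A0 G AG u \<and> smooth_map G AG G AG i \<and>
     smooth_map_subset (prod_topology G G) (prod_atlas AG AG) G AG
        {(g,h). g \<in> topspace G \<and> h \<in> topspace G \<and> s g = t h} (\<lambda>(g,h). m g h) \<and>
     \<comment> \<open>Hausdorff source fibres\<close>
     (\<forall>x\<in>topspace G0. Hausdorff_space (subtopology G {g \<in> topspace G. s g = x}))"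

text \<open>Orbit relation of G restricted to objects in U (for U = whole base: the relation
  defining G_0/G; for U open: the relation defining U/G|_U, since the arrows of G|_U are
  exactly the arrows with source and target in U).\<close>
definition orbit_rel :: "'g topology \<Rightarrow> ('g \<Rightarrow> 'o) \<Rightarrow> ('g \<Rightarrow> 'o) \<Rightarrow> 'o set \<Rightarrow> ('o \<times> 'o) set" where
  "orbit_rel G s t U = {(x,y). x \<in> U \<and> y \<in> U \<and> (\<exists>g\<in>topspace G. s g = x \<and> t g = y)}"

definition mplot ::
  "'a topology \<Rightarrow> ('a set \<times> ('a \<Rightarrow> 'm::euclidean_space)) set \<Rightarrow>
   ('n::euclidean_space) set \<Rightarrow> ('n \<Rightarrow> 'a) \<Rightarrow> bool" where
  "mplot X A D p \<longleftrightarrow> open D \<and> p ` D \<subseteq> topspace X \<and>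
     continuous_map (top_of_set D) X p \<and>
     (\<forall>(W,\<phi>)\<in>A. smooth_on (D \<inter> p -` W) (\<phi> \<circ> p))"

text \<open>A point of the quotient is
  represented by its equivalence class.\<close>
definition qplot ::
  "'a topology \<Rightarrow> ('a set \<times> ('a \<Rightarrow> 'm::euclidean_space)) set \<Rightarrow> 'a set \<Rightarrow> ('a \<times> 'a) set \<Rightarrow>
   ('n::euclidean_space) set \<Rightarrow> ('n \<Rightarrow> 'a set) \<Rightarrow> bool" where
  "qplot X A S R D P \<longleftrightarrow> open D \<and>
     (\<forall>r\<in>D. \<exists>D' q. r \<in> D' \<and> D' \<subseteq> D \<and> mplot X A D' q \<and> q ` D' \<subseteq> S \<and>
                  (\<forall>r'\<in>D'. P r' = R `` {q r'}))"

definition subset_plot :: "('n set \<Rightarrow> ('n \<Rightarrow> 'b) \<Rightarrow> bool) \<Rightarrow> 'b set \<Rightarrow> 'n set \<Rightarrow> ('n \<Rightarrow> 'b) \<Rightarrow> bool" where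
  "subset_plot Pl T D P \<longleftrightarrow> P ` D \<subseteq> T \<and> Pl D P"

definition induced_map :: "('a \<times> 'a) set \<Rightarrow> 'a set \<Rightarrow> 'a set" where
  "induced_map R c = R `` {SOME x. x \<in> c}"

definition lie_group ::
  "'g topology \<Rightarrow> ('g set \<times> ('g \<Rightarrow> 'c::euclidean_space)) set \<Rightarrow>
   ('g \<Rightarrow> 'g \<Rightarrow> 'g) \<Rightarrow> ('g \<Rightarrow> 'g) \<Rightarrow> 'g \<Rightarrow> bool" where
  "lie_group H AH mul ginv e \<longleftrightarrow>
     smooth_manifold H AH \<and> Hausdorff_space H \<and> second_countable H \<and>
     e \<in> topspace H \<and>
     (\<forall>g\<in>topspace H. \<forall>h\<in>topspace H. mul g h \<in> topspace H) \<and>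
     (\<forall>g\<in>topspace H. \<forall>h\<in>topspace H. \<forall>k\<in>topspace H. mul (mul g h) k = mul g (mul h k)) \<and>
     (\<forall>g\<in>topspace H. mul e g = g \<and> mul g e = g) \<and>
     (\<forall>g\<in>topspace H. ginv g \<in> topspace H \<and> mul (ginv g) g = e \<and> mul g (ginv g) = e) \<and>
     smooth_map (prod_topology H H) (prod_atlas AH AH) H AH (\<lambda>(g,h). mul g h) \<and>
     smooth_map H AH H AH ginv"

definition smooth_action ::
  "'g topology \<Rightarrow> ('g set \<times> ('g \<Rightarrow> 'c::euclidean_space)) set \<Rightarrow>
   ('g \<Rightarrow> 'g \<Rightarrow> 'g) \<Rightarrow> 'g \<Rightarrow>
   'a topology \<Rightarrow> ('a set \<times> ('a \<Rightarrow> 'm::euclidean_space)) set \<Rightarrow> ('g \<Rightarrow> 'a \<Rightarrow> 'a) \<Rightarrow> bool" where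
  "smooth_action H AH mul e M AM act \<longleftrightarrow>
     (\<forall>x\<in>topspace M. act e x = x) \<and>
     (\<forall>g\<in>topspace H. \<forall>h\<in>topspace H. \<forall>x\<in>topspace M. act (mul g h) x = act g (act h x)) \<and>
     smooth_map (prod_topology H M) (prod_atlas AH AM) M AM (\<lambda>(g,x). act g x)"

definition action_orbit_rel :: "'g topology \<Rightarrow> 'a topology \<Rightarrow> ('g \<Rightarrow> 'a \<Rightarrow> 'a) \<Rightarrow> ('a \<times> 'a) set" where
  "action_orbit_rel H M act = {(x, act g x) | x g. x \<in> topspace M \<and> g \<in> topspace H}"

end

theory Submission
  imports Defs
begin


lemma ck_SucD:
  assumes "ck (Suc k) S f" "x \<in> S"
  shows "(f has_derivative frechet_derivative f (at x)) (at x)"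
  using assms by (simp add: frechet_derivative_works)

lemma ck_SucD2:
  assumes "ck (Suc k) S f"
  shows "ck k S (\<lambda>x. frechet_derivative f (at x) v)"
  using assms by simp

lemma ck_cong:
  assumes "open S" "\<And>x. x \<in> S \<Longrightarrow> f x = g x" "ck k S f"
  shows "ck k S g"
  using assms(2,3)
proof (induction k arbitrary: f g)
  case 0
  then show ?case using continuous_on_cong by (metis ck.simps(1))
next
  case (Suc k)
  have d: "(g has_derivative frechet_derivative f (at x)) (at x)" if "x \<in> S" for x
    using has_derivative_transform_within_open[OF ck_SucD[OF Suc.prems(2) that] assms(1) that] Suc.prems(1)
    by blast
  have e: "frechet_derivative g (at x) = frechet_derivative f (at x)" if "x \<in> S" for x
    using d[OF that] frechet_derivative_at by metis
  show ?case
    using Suc.prems d e Suc.IH[of "\<lambda>x. frechet_derivative f (at x) v" "\<lambda>x. frechet_derivative g (at x) v" for v]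
    by (auto simp: differentiable_def)
qed

lemma ck_SucI:
  assumes "open S" "\<And>x. x \<in> S \<Longrightarrow> (f has_derivative f' x) (at x)"
    "\<And>v. ck k S (\<lambda>x. f' x v)"
  shows "ck (Suc k) S f"
proof -
  have e: "frechet_derivative f (at x) = f' x" if "x \<in> S" for x
    using assms(2)[OF that] frechet_derivative_at by metis
  show ?thesis
    using assms ck_cong[OF assms(1), of "\<lambda>x. f' x v" "\<lambda>x. frechet_derivative f (at x) v" for v] e
    by (auto simp: differentiable_def)
qed

lemma ck_mono: "ck (Suc k) S f \<Longrightarrow> ck k S f"
proof (induction k arbitrary: f)
  case 0
  then show ?case
    by (auto intro!: continuous_at_imp_continuous_on differentiable_imp_continuous_within)
next
  case (Suc k)
  then show ?case by (metis ck.simps(2))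
qed

lemma ck_mono_le: "ck k S f \<Longrightarrow> j \<le> k \<Longrightarrow> ck j S f"
proof (induction k)
  case 0 then show ?case by simp
next
  case (Suc k) then show ?case using ck_mono le_Suc_eq by blast
qed

lemma ck_subset: "ck k S f \<Longrightarrow> T \<subseteq> S \<Longrightarrow> ck k T f"
proof (induction k arbitrary: f)
  case 0 then show ?case using continuous_on_subset by auto
next
  case (Suc k) then show ?case by auto
qed

lemma ck_empty: "ck k {} f"
  by (induction k arbitrary: f) auto

lemma ck_const: "open S \<Longrightarrow> ck k S (\<lambda>x. c)"
proof (induction k arbitrary: c)
  case 0 then show ?case by simp
next
  case (Suc k)
  show ?case by (rule ck_SucI[where f'="\<lambda>x v. 0"]) (use Suc in auto)
qed

lemma ck_linear:
  assumes "open S" "bounded_linear L" "ck k S f"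
  shows "ck k S (\<lambda>x. L (f x))"
  using assms(3)
proof (induction k arbitrary: f)
  case 0 then show ?case
    using assms(2) by (simp add: linear_continuous_on continuous_on_compose2[of UNIV L] )
next
  case (Suc k)
  show ?case
    by (rule ck_SucI[where f'="\<lambda>x v. L (frechet_derivative f (at x) v)"])
       (use Suc assms bounded_linear.has_derivative[OF assms(2) ck_SucD[OF Suc.prems]] in auto)
qed

lemma ck_add:
  assumes "open S" "ck k S f" "ck k S g"
  shows "ck k S (\<lambda>x. f x + g x)"
  using assms(2,3)
proof (induction k arbitrary: f g)
  case 0 then show ?case by (simp add: continuous_on_add)
next
  case (Suc k)
  show ?case
    by (rule ck_SucI[where f'="\<lambda>x v. frechet_derivative f (at x) v + frechet_derivative g (at x) v"])
       (use Suc assms in \<open>auto intro!: has_derivative_add ck_SucD\<close>)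
qed

lemma ck_sum:
  assumes "open S" "finite I" "\<And>i. i \<in> I \<Longrightarrow> ck k S (f i)"
  shows "ck k S (\<lambda>x. \<Sum>i\<in>I. f i x)"
  using assms(2,3)
proof (induction I rule: finite_induct)
  case empty then show ?case using ck_const[OF assms(1)] by simp
next
  case (insert i I) then show ?case using ck_add[OF assms(1), of k "f i" "\<lambda>x. \<Sum>i\<in>I. f i x"] by simp
qed

lemma ck_bilinear:
  fixes prod :: "'b::real_normed_vector \<Rightarrow> 'c::real_normed_vector \<Rightarrow> 'd::real_normed_vector"
    and f :: "'a::euclidean_space \<Rightarrow> 'b"
  assumes "open S" "bounded_bilinear prod" "ck k S f" "ck k S g"
  shows "ck k S (\<lambda>x. prod (f x) (g x))"
  using assms(3,4)
proof (induction k arbitrary: f g)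
  case 0 then show ?case using bounded_bilinear.continuous_on[OF assms(2)] by simp
next
  case (Suc k)
  have "ck k S (\<lambda>x. prod (f x) (frechet_derivative g (at x) v) + prod (frechet_derivative f (at x) v) (g x))" for v
    by (rule ck_add[OF assms(1)])
       (use Suc.IH[OF ck_mono[OF Suc.prems(1)] ck_SucD2[OF Suc.prems(2)]]
            Suc.IH[OF ck_SucD2[OF Suc.prems(1)] ck_mono[OF Suc.prems(2)]] in auto)
  then show ?case
    by (intro ck_SucI[where f'="\<lambda>x v. prod (f x) (frechet_derivative g (at x) v) + prod (frechet_derivative f (at x) v) (g x)"])
       (use assms(1) bounded_bilinear.FDERIV[OF assms(2) ck_SucD[OF Suc.prems(1)] ck_SucD[OF Suc.prems(2)]] in auto)
qed

lemma ck_local: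
  assumes "open S" "\<And>x. x \<in> S \<Longrightarrow> \<exists>T. open T \<and> x \<in> T \<and> ck k (S \<inter> T) f"
  shows "ck k S f"
  using assms(2)
proof (induction k arbitrary: f)
  case 0
  have "isCont f x" if "x \<in> S" for x
  proof -
    obtain T where T: "open T" "x \<in> T" "ck 0 (S \<inter> T) f" using 0 \<open>x \<in> S\<close> by blast
    have "open (S \<inter> T)" using T assms(1) by blast
    then show ?thesis using continuous_on_eq_continuous_at[of "S \<inter> T" f] T that by simp
  qed
  then show ?case by (simp add: continuous_at_imp_continuous_on)
next
  case (Suc k)
  have 1: "f differentiable at x" if "x \<in> S" for x
  proof -
    obtain T where "open T" "x \<in> T" "ck (Suc k) (S \<inter> T) f" using Suc.prems \<open>x \<in> S\<close> by blast
    then show ?thesis using \<open>x \<in> S\<close> by (simp only: ck.simps) blast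
  qed
  have 2: "ck k S (\<lambda>x. frechet_derivative f (at x) v)" for v
  proof (rule Suc.IH)
    fix x assume "x \<in> S"
    then obtain T where "open T" "x \<in> T" "ck (Suc k) (S \<inter> T) f" using Suc.prems by blast
    then show "\<exists>T. open T \<and> x \<in> T \<and> ck k (S \<inter> T) (\<lambda>x. frechet_derivative f (at x) v)"
      using ck_SucD2 by blast
  qed
  show ?case using 1 2 by simp
qed

lemma ck_compose:
  fixes f :: "'a::euclidean_space \<Rightarrow> 'b::euclidean_space" and g :: "'b \<Rightarrow> 'c::real_normed_vector"
  assumes "open S" "open T" "f ` S \<subseteq> T" "ck k S f" "ck k T g"
  shows "ck k S (\<lambda>x. g (f x))"
  using assms(3,4,5)
proof (induction k arbitrary: f g)
  case 0
  have "continuous_on S f" "continuous_on T g" "f ` S \<subseteq> T" using 0 by simp_all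
  then have "continuous_on S (\<lambda>x. g (f x))" using continuous_on_compose2 by blast
  then show ?case by simp
next
  case (Suc k)
  let ?g' = "\<lambda>y. frechet_derivative g (at y)"
  let ?f' = "\<lambda>x. frechet_derivative f (at x)"
  have lin: "linear (?g' y)" if "y \<in> T" for y
    using ck_SucD[OF Suc.prems(3) that] has_derivative_linear by blast
  have eq: "(\<Sum>b\<in>Basis. (?f' x v \<bullet> b) *\<^sub>R ?g' (f x) b) = ?g' (f x) (?f' x v)" if "x \<in> S" for x v
  proof -
    have "?g' (f x) (?f' x v) = ?g' (f x) (\<Sum>b\<in>Basis. (?f' x v \<bullet> b) *\<^sub>R b)"
      by (simp add: euclidean_representation)
    also have "\<dots> = (\<Sum>b\<in>Basis. (?f' x v \<bullet> b) *\<^sub>R ?g' (f x) b)"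
    proof -
      have lf: "linear (?g' (f x))" using lin that Suc.prems(1) by blast
      show ?thesis by (simp add: linear_sum[OF lf] linear_scale[OF lf] o_def)
    qed
    finally show ?thesis by (rule sym)
  qed
  have A: "ck k S (\<lambda>x. \<Sum>b\<in>Basis. (?f' x v \<bullet> b) *\<^sub>R ?g' (f x) b)" for v
  proof (rule ck_sum[OF assms(1)], simp)
    fix b :: 'b
    have 1: "ck k S (\<lambda>x. ?f' x v \<bullet> b)"
      using ck_linear[OF assms(1) bounded_linear_inner_left ck_SucD2[OF Suc.prems(2), of v]] .
    have 2: "ck k S (\<lambda>x. ?g' (f x) b)"
      using Suc.IH[OF Suc.prems(1) ck_mono[OF Suc.prems(2)] ck_SucD2[OF Suc.prems(3), of b]] .
    show "ck k S (\<lambda>x. (?f' x v \<bullet> b) *\<^sub>R ?g' (f x) b)"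
      using ck_bilinear[OF assms(1) bounded_bilinear_scaleR 1 2] .
  qed
  have "ck k S (\<lambda>x. ?g' (f x) (?f' x v))" for v
    using ck_cong[OF assms(1) eq A] .
  moreover have "((\<lambda>x. g (f x)) has_derivative (\<lambda>v. ?g' (f x) (?f' x v))) (at x)" if "x \<in> S" for x
  proof -
    have "f x \<in> T" using that Suc.prems(1) by blast
    then show ?thesis
      using diff_chain_at[OF ck_SucD[OF Suc.prems(2) that] ck_SucD[OF Suc.prems(3)]]
      by (simp add: o_def)
  qed
  ultimately show ?case
    by (intro ck_SucI[where f'="\<lambda>x v. ?g' (f x) (?f' x v)"] assms(1))
qed



definition binv :: "('b::euclidean_space \<Rightarrow>\<^sub>L 'b) \<Rightarrow> ('b \<Rightarrow>\<^sub>L 'b)" where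
  "binv L = Blinfun (inv (blinfun_apply L))"

lemma bc_assoc: "(a o\<^sub>L b) o\<^sub>L c = a o\<^sub>L (b o\<^sub>L c)"
  by (rule blinfun_eqI) simp

lemma bc_id [simp]: "id_blinfun o\<^sub>L a = a" "a o\<^sub>L id_blinfun = a"
  by (auto intro: blinfun_eqI)

lemmas bc_simps = bounded_bilinear.add_left[OF bounded_bilinear_blinfun_compose]
  bounded_bilinear.add_right[OF bounded_bilinear_blinfun_compose]
  bounded_bilinear.diff_left[OF bounded_bilinear_blinfun_compose]
  bounded_bilinear.diff_right[OF bounded_bilinear_blinfun_compose]
  bounded_bilinear.minus_left[OF bounded_bilinear_blinfun_compose]
  bounded_bilinear.minus_right[OF bounded_bilinear_blinfun_compose]

lemma binv_apply:
  fixes L :: "'b::euclidean_space \<Rightarrow>\<^sub>L 'b"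
  assumes "bij (blinfun_apply L)"
  shows "blinfun_apply (binv L) = inv (blinfun_apply L)"
proof -
  have "bounded_linear (inv (blinfun_apply L))"
    using inj_linear_imp_inv_bounded_linear[OF blinfun.bounded_linear_right bij_is_inj[OF assms]] .
  then show ?thesis unfolding binv_def by (rule bounded_linear_Blinfun_apply)
qed

lemma binv_left:
  fixes L :: "'b::euclidean_space \<Rightarrow>\<^sub>L 'b"
  assumes "bij (blinfun_apply L)"
  shows "binv L o\<^sub>L L = id_blinfun"
  by (rule blinfun_eqI) (simp add: binv_apply[OF assms] bij_is_inj[OF assms])

lemma binv_right:
  fixes L :: "'b::euclidean_space \<Rightarrow>\<^sub>L 'b"
  assumes "bij (blinfun_apply L)"
  shows "L o\<^sub>L binv L = id_blinfun"
  by (rule blinfun_eqI) (simp add: binv_apply[OF assms] bij_is_surj[OF assms] surj_f_inv_f)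

lemma binv_near:
  fixes L H :: "'b::euclidean_space \<Rightarrow>\<^sub>L 'b"
  assumes "bij (blinfun_apply L)" and c: "norm (binv L) + 1 = c" and H: "norm H * (2 * c) < 1"
  shows "bij (blinfun_apply (L + H))" "norm (binv (L + H)) \<le> 2 * c"
proof -
  let ?Li = "binv L"
  have cpos: "c > 0" using c by (smt (verit) norm_ge_zero)
  have low: "norm w \<le> 2 * c * norm ((L + H) w)" for w
  proof -
    have "norm w = norm (?Li (L w))"
      using binv_left[OF assms(1)] by (metis blinfun_apply_blinfun_compose blinfun_apply_id_blinfun)
    also have "\<dots> \<le> norm ?Li * norm (L w)" by (rule norm_blinfun)
    also have "\<dots> \<le> c * norm (L w)" using c by (simp add: mult_right_mono)
    finally have 1: "norm w \<le> c * norm (L w)" .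
    have 2: "norm (H w) \<le> norm H * norm w" by (rule norm_blinfun)
    have 3: "norm (L w) \<le> norm ((L + H) w) + norm (H w)"
      by (metis add_diff_cancel_right' blinfun.add_left norm_triangle_ineq4 order.trans norm_diff_ineq order_refl
          diff_le_eq norm_triangle_ineq2)
    have "c * norm (H w) \<le> c * (norm H * norm w)" using 2 cpos by simp
    also have "\<dots> \<le> norm w / 2"
    proof -
      have "c * (norm H * norm w) = (norm H * (2 * c)) * norm w / 2" by simp
      also have "\<dots> \<le> 1 * norm w / 2" using H by (intro divide_right_mono mult_right_mono) auto
      finally show ?thesis by simp
    qed
    finally have "c * norm (H w) \<le> norm w / 2" .
    moreover have "c * norm (L w) \<le> c * norm ((L + H) w) + c * norm (H w)"
      using mult_left_mono[OF 3, of c] cpos by (simp add: distrib_left)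
    ultimately have "norm w \<le> c * norm ((L + H) w) + norm w / 2"
      using 1 by linarith
    then show ?thesis by simp
  qed
  have inj: "inj (blinfun_apply (L + H))"
  proof (rule injI)
    fix x y assume "(L + H) x = (L + H) y"
    then have "(L + H) (x - y) = 0" by (simp add: blinfun.diff_right)
    then have "norm (x - y) \<le> 0" using low[of "x - y"] by simp
    then show "x = y" by simp
  qed
  have lin: "linear (blinfun_apply (L + H))" using blinfun.bounded_linear_right bounded_linear.linear by blast
  show bij: "bij (blinfun_apply (L + H))"
    using inj linear_inj_imp_surj[OF lin inj] by (simp add: bij_def)
  show "norm (binv (L + H)) \<le> 2 * c"
  proof (rule norm_blinfun_bound)
    show "0 \<le> 2 * c" using cpos by simp
    fix u
    have "(L + H) (binv (L + H) u) = u"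
      using binv_right[OF bij] by (metis blinfun_apply_blinfun_compose blinfun_apply_id_blinfun)
    then show "norm (binv (L + H) u) \<le> 2 * c * norm u" using low[of "binv (L + H) u"] by simp
  qed
qed

lemma binv_has_derivative:
  fixes L :: "'b::euclidean_space \<Rightarrow>\<^sub>L 'b"
  assumes L: "bij (blinfun_apply L)"
  shows "(binv has_derivative (\<lambda>H. - (binv L o\<^sub>L H o\<^sub>L binv L))) (at L)"
proof -
  let ?Li = "binv L"
  define c where "c = norm ?Li + 1"
  have cpos: "c > 0" unfolding c_def by (smt (verit) norm_ge_zero)
  have bl: "bounded_linear (\<lambda>H. - (?Li o\<^sub>L H o\<^sub>L ?Li))"
  proof -
    have a: "bounded_linear (\<lambda>x. ?Li o\<^sub>L x)"
      by (rule bounded_bilinear.bounded_linear_right[OF bounded_bilinear_blinfun_compose])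
    have b: "bounded_linear (\<lambda>a. a o\<^sub>L ?Li)"
      by (rule bounded_bilinear.bounded_linear_left[OF bounded_bilinear_blinfun_compose])
    show ?thesis using bounded_linear_minus[OF bounded_linear_compose[OF b a]] by simp
  qed
  have main: "norm (binv (L + H) - ?Li - - (?Li o\<^sub>L H o\<^sub>L ?Li)) \<le> 2 * c ^ 3 * norm H ^ 2"
    if H: "norm H * (2 * c) < 1" for H
  proof -
    let ?M = "binv (L + H)"
    have bij: "bij (blinfun_apply (L + H))" and nM: "norm ?M \<le> 2 * c"
      using binv_near[OF L c_def[symmetric] H] by auto
    have e1: "?M - ?Li = - (?M o\<^sub>L H o\<^sub>L ?Li)"
    proof -
      have 1: "?M o\<^sub>L (L + H) o\<^sub>L ?Li = ?Li"
        using binv_left[OF bij] by simp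
      have 2: "?M o\<^sub>L L o\<^sub>L ?Li = ?M"
        using binv_right[OF L] by (simp add: bc_assoc)
      have "?M o\<^sub>L (L + H) o\<^sub>L ?Li = (?M o\<^sub>L L o\<^sub>L ?Li) + (?M o\<^sub>L H o\<^sub>L ?Li)"
        by (simp add: bc_simps)
      then have "?Li = ?M + (?M o\<^sub>L H o\<^sub>L ?Li)" using 1 2 by simp
      then show ?thesis by (simp add: algebra_simps)
    qed
    have "?M - ?Li - - (?Li o\<^sub>L H o\<^sub>L ?Li) = (?Li - ?M) o\<^sub>L H o\<^sub>L ?Li"
      using e1 by (simp add: bc_simps algebra_simps)
    also have "\<dots> = (?M o\<^sub>L H o\<^sub>L ?Li) o\<^sub>L H o\<^sub>L ?Li"
    proof -
      have "?Li - ?M = ?M o\<^sub>L H o\<^sub>L ?Li" using e1 by (metis minus_diff_eq minus_minus)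
      then show ?thesis by simp
    qed
    finally have eq: "?M - ?Li - - (?Li o\<^sub>L H o\<^sub>L ?Li) = (?M o\<^sub>L H o\<^sub>L ?Li) o\<^sub>L H o\<^sub>L ?Li" .
    have nLi: "norm ?Li \<le> c" unfolding c_def by simp
    have "norm ((?M o\<^sub>L H o\<^sub>L ?Li) o\<^sub>L H o\<^sub>L ?Li) \<le> norm ?M * norm H * norm ?Li * norm H * norm ?Li"
      by (smt (verit) mult_right_mono norm_blinfun_compose norm_ge_zero)
    also have "\<dots> \<le> (2 * c) * norm H * c * norm H * c"
      by (intro mult_mono nM nLi) (use cpos in auto)
    also have "\<dots> = 2 * c ^ 3 * norm H ^ 2" by (simp add: power2_eq_square power3_eq_cube)
    finally show ?thesis using eq by simp
  qed
  show ?thesis unfolding has_derivative_at_alt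
  proof (intro conjI bl allI impI)
    fix e :: real assume "e > 0"
    define d where "d = min (1 / (2 * c)) (e / (2 * c ^ 3))"
    have dpos: "d > 0" unfolding d_def using cpos \<open>e > 0\<close> by simp
    show "\<exists>d>0. \<forall>y. norm (y - L) < d \<longrightarrow>
           norm (binv y - binv L - - (binv L o\<^sub>L (y - L) o\<^sub>L binv L)) \<le> e * norm (y - L)"
    proof (intro exI[of _ d] conjI dpos allI impI)
      fix y assume y: "norm (y - L) < d"
      define H where "H = y - L"
      have yH: "y = L + H" unfolding H_def by simp
      have h1: "norm H * (2 * c) < 1"
      proof -
        have "norm H < 1 / (2 * c)" using y d_def H_def by simp
        then show ?thesis using cpos by (simp add: field_simps)
      qed
      have h2: "norm H * (2 * c ^ 3) \<le> e"
      proof -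
        have "norm H < e / (2 * c ^ 3)" using y d_def H_def by simp
        then show ?thesis using cpos by (simp add: field_simps)
      qed
      have "norm (binv y - binv L - - (binv L o\<^sub>L H o\<^sub>L binv L)) \<le> 2 * c ^ 3 * norm H ^ 2"
        using main[OF h1] yH by simp
      also have "\<dots> = (norm H * (2 * c ^ 3)) * norm H" by (simp add: power2_eq_square)
      also have "\<dots> \<le> e * norm H" using h2 by (intro mult_right_mono) auto
      finally show "norm (binv y - binv L - - (binv L o\<^sub>L (y - L) o\<^sub>L binv L)) \<le> e * norm (y - L)"
        unfolding H_def .
    qed
  qed
qed



lemma ck_binv:
  fixes M :: "'a::euclidean_space \<Rightarrow> ('b::euclidean_space \<Rightarrow>\<^sub>L 'b)"
  assumes S: "open S" and bij: "\<And>x. x \<in> S \<Longrightarrow> bij (blinfun_apply (M x))" and "ck k S M"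
  shows "ck k S (\<lambda>x. binv (M x))"
  using assms(3)
proof (induction k)
  case 0
  have "isCont (\<lambda>x. binv (M x)) x" if "x \<in> S" for x
  proof -
    have 1: "isCont M x" using 0 S that continuous_on_eq_continuous_at by auto
    have 2: "isCont binv (M x)"
      using has_derivative_continuous[OF binv_has_derivative[OF bij[OF that]]] .
    show ?thesis using continuous_at_compose[OF 1 2] by (simp add: o_def)
  qed
  then show ?case by (simp add: continuous_at_imp_continuous_on)
next
  case (Suc k)
  let ?D = "\<lambda>x. frechet_derivative M (at x)"
  have der: "((\<lambda>x. binv (M x)) has_derivative (\<lambda>v. - (binv (M x) o\<^sub>L ?D x v o\<^sub>L binv (M x)))) (at x)"
    if "x \<in> S" for x
    using diff_chain_at[OF ck_SucD[OF Suc.prems that] binv_has_derivative[OF bij[OF that]]]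
    by (simp add: o_def)
  have ih: "ck k S (\<lambda>x. binv (M x))" using Suc.IH[OF ck_mono[OF Suc.prems]] .
  have "ck k S (\<lambda>x. - (binv (M x) o\<^sub>L ?D x v o\<^sub>L binv (M x)))" for v
  proof -
    have "ck k S (\<lambda>x. binv (M x) o\<^sub>L ?D x v)"
      by (rule ck_bilinear[OF S bounded_bilinear_blinfun_compose ih ck_SucD2[OF Suc.prems]])
    then have "ck k S (\<lambda>x. binv (M x) o\<^sub>L ?D x v o\<^sub>L binv (M x))"
      by (rule ck_bilinear[OF S bounded_bilinear_blinfun_compose _ ih])
    then show ?thesis
      by (rule ck_linear[OF S bounded_linear_minus[OF bounded_linear_ident]])
  qed
  then show ?case by (intro ck_SucI[OF S der])
qed

definition bEb :: "'a::euclidean_space \<Rightarrow> 'c::real_normed_vector \<Rightarrow> ('a \<Rightarrow>\<^sub>L 'c)" where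
  "bEb b c = Blinfun (\<lambda>w. (w \<bullet> b) *\<^sub>R c)"

lemma bEb_apply: "blinfun_apply (bEb b c) = (\<lambda>w. (w \<bullet> b) *\<^sub>R c)"
  unfolding bEb_def
  by (rule bounded_linear_Blinfun_apply) (intro bounded_linear_scaleR_const bounded_linear_inner_left)

lemma bEb_linear: "bounded_linear (bEb b)"
proof (rule bounded_linear_intro[where K="norm b"])
  show "bEb b (x + y) = bEb b x + bEb b y" for x y
    by (rule blinfun_eqI) (simp add: bEb_apply blinfun.add_left scaleR_right_distrib)
  show "bEb b (r *\<^sub>R x) = r *\<^sub>R bEb b x" for r x
    by (rule blinfun_eqI) (simp add: bEb_apply blinfun.scaleR_left)
  show "norm (bEb b x) \<le> norm x * norm b" for x
  proof (rule norm_blinfun_bound)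
    show "0 \<le> norm x * norm b" by simp
    fix w
    have "norm (bEb b x w) = \<bar>w \<bullet> b\<bar> * norm x" by (simp add: bEb_apply)
    also have "\<dots> \<le> (norm w * norm b) * norm x"
      by (intro mult_right_mono Cauchy_Schwarz_ineq2) auto
    finally show "norm (bEb b x w) \<le> norm x * norm b * norm w" by (simp add: ac_simps)
  qed
qed

lemma Blinfun_rep:
  fixes F :: "'a::euclidean_space \<Rightarrow> 'c::real_normed_vector"
  assumes "linear F"
  shows "Blinfun F = (\<Sum>b\<in>Basis. bEb b (F b))"
proof (rule blinfun_eqI)
  fix w
  have bl: "bounded_linear F" using assms linear_conv_bounded_linear by blast
  have "Blinfun F w = F (\<Sum>b\<in>Basis. (w \<bullet> b) *\<^sub>R b)"
    by (simp add: bounded_linear_Blinfun_apply[OF bl] euclidean_representation)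
  also have "\<dots> = (\<Sum>b\<in>Basis. (w \<bullet> b) *\<^sub>R F b)"
    by (simp add: linear_sum[OF assms] linear_scale[OF assms] o_def)
  also have "\<dots> = (\<Sum>b\<in>Basis. bEb b (F b)) w"
    by (simp add: blinfun.sum_left bEb_apply)
  finally show "Blinfun F w = (\<Sum>b\<in>Basis. bEb b (F b)) w" .
qed

lemma ck_Blinfun:
  fixes F :: "'a::euclidean_space \<Rightarrow> 'b::euclidean_space \<Rightarrow> 'c::real_normed_vector"
  assumes S: "open S" and lin: "\<And>x. x \<in> S \<Longrightarrow> linear (F x)" and ck: "\<And>v. ck k S (\<lambda>x. F x v)"
  shows "ck k S (\<lambda>x. Blinfun (F x))"
proof -
  have A: "ck k S (\<lambda>x. \<Sum>b\<in>Basis. bEb b (F x b))"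
    by (rule ck_sum[OF S finite_Basis]) (rule ck_linear[OF S bEb_linear ck])
  show ?thesis
  proof (rule ck_cong[OF S _ A])
    fix x assume "x \<in> S"
    then show "(\<Sum>b\<in>Basis. bEb b (F x b)) = Blinfun (F x)" using Blinfun_rep[OF lin] by simp
  qed
qed



lemma ck_id: "open S \<Longrightarrow> ck k S (\<lambda>x. x)"
proof (induction k)
  case 0 then show ?case by (simp add: continuous_on_id)
next
  case (Suc k)
  show ?case by (rule ck_SucI[where f'="\<lambda>x v. v"]) (use Suc ck_const in auto)
qed

lemma smooth_onD: "smooth_on S f \<Longrightarrow> ck k S f"
  by (simp add: smooth_on_def)

lemma smooth_onI: "(\<And>k. ck k S f) \<Longrightarrow> smooth_on S f"
  by (simp add: smooth_on_def)

lemma smooth_on_empty: "smooth_on {} f"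
  by (simp add: smooth_on_def ck_empty)

lemma smooth_on_subset: "smooth_on S f \<Longrightarrow> T \<subseteq> S \<Longrightarrow> smooth_on T f"
  by (meson smooth_on_def ck_subset)

lemma smooth_on_cong: "open S \<Longrightarrow> (\<And>x. x \<in> S \<Longrightarrow> f x = g x) \<Longrightarrow> smooth_on S f \<Longrightarrow> smooth_on S g"
  by (meson smooth_on_def ck_cong)

lemma smooth_on_const: "open S \<Longrightarrow> smooth_on S (\<lambda>x. c)"
  by (simp add: smooth_on_def ck_const)

lemma smooth_on_id: "open S \<Longrightarrow> smooth_on S (\<lambda>x. x)"
  by (simp add: smooth_on_def ck_id)

lemma smooth_on_linear: "open S \<Longrightarrow> bounded_linear L \<Longrightarrow> smooth_on S f \<Longrightarrow> smooth_on S (\<lambda>x. L (f x))"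
  by (simp add: smooth_on_def ck_linear)

lemma smooth_on_add: "open S \<Longrightarrow> smooth_on S f \<Longrightarrow> smooth_on S g \<Longrightarrow> smooth_on S (\<lambda>x. f x + g x)"
  by (simp add: smooth_on_def ck_add)

lemma smooth_on_bilinear:
  fixes prod :: "'b::real_normed_vector \<Rightarrow> 'c::real_normed_vector \<Rightarrow> 'd::real_normed_vector"
    and f :: "'a::euclidean_space \<Rightarrow> 'b"
  shows "open S \<Longrightarrow> bounded_bilinear prod \<Longrightarrow> smooth_on S f \<Longrightarrow> smooth_on S g \<Longrightarrow>
    smooth_on S (\<lambda>x. prod (f x) (g x))"
  by (simp add: smooth_on_def ck_bilinear)

lemma smooth_on_compose:
  fixes f :: "'a::euclidean_space \<Rightarrow> 'b::euclidean_space" and g :: "'b \<Rightarrow> 'c::real_normed_vector"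
  shows "open S \<Longrightarrow> open T \<Longrightarrow> f ` S \<subseteq> T \<Longrightarrow> smooth_on S f \<Longrightarrow> smooth_on T g \<Longrightarrow>
    smooth_on S (\<lambda>x. g (f x))"
  by (simp add: smooth_on_def ck_compose)

lemma smooth_on_local:
  assumes "open S" "\<And>x. x \<in> S \<Longrightarrow> \<exists>T. open T \<and> x \<in> T \<and> smooth_on (S \<inter> T) f"
  shows "smooth_on S f"
  unfolding smooth_on_def
proof
  fix k show "ck k S f"
    by (rule ck_local[OF assms(1)]) (use assms(2) smooth_onD in blast)
qed

lemma smooth_on_has_derivative:
  "smooth_on S f \<Longrightarrow> x \<in> S \<Longrightarrow> (f has_derivative frechet_derivative f (at x)) (at x)"
  using ck_SucD smooth_onD by blast

lemma smooth_on_pair: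
  fixes f :: "'a::euclidean_space \<Rightarrow> 'b::real_normed_vector" and g :: "'a \<Rightarrow> 'c::real_normed_vector"
  assumes "open S" "smooth_on S f" "smooth_on S g"
  shows "smooth_on S (\<lambda>x. (f x, g x))"
proof -
  have a: "bounded_linear (\<lambda>a::'b. (a, 0::'c))"
    by (intro bounded_linear_Pair bounded_linear_ident bounded_linear_zero)
  have b: "bounded_linear (\<lambda>b::'c. (0::'b, b))"
    by (intro bounded_linear_Pair bounded_linear_ident bounded_linear_zero)
  have "smooth_on S (\<lambda>x. (f x, 0::'c) + (0::'b, g x))"
    by (intro smooth_on_add assms smooth_on_linear[OF assms(1) a] smooth_on_linear[OF assms(1) b])
  then show ?thesis by simp
qed

lemma smooth_local_inverse:
  fixes h :: "'b::euclidean_space \<Rightarrow> 'b"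
  assumes O: "open \<Omega>" and sh: "smooth_on \<Omega> h" and y0: "y0 \<in> \<Omega>"
    and d0: "frechet_derivative h (at y0) = id"
  obtains U' V g where "open U'" "U' \<subseteq> \<Omega>" "y0 \<in> U'" "open V" "h y0 \<in> V"
    "homeomorphism U' V h g" "smooth_on V g"
proof -
  define f' where "f' x = Blinfun (frechet_derivative h (at x))" for x
  have lin: "linear (frechet_derivative h (at x))" if "x \<in> \<Omega>" for x
    using smooth_on_has_derivative[OF sh that] has_derivative_linear by blast
  have fa: "blinfun_apply (f' x) = frechet_derivative h (at x)" if "x \<in> \<Omega>" for x
    unfolding f'_def using lin[OF that] linear_conv_bounded_linear bounded_linear_Blinfun_apply by blast
  have derf: "(h has_derivative blinfun_apply (f' x)) (at x)" if "x \<in> \<Omega>" for x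
    using smooth_on_has_derivative[OF sh that] fa[OF that] by simp
  have ckf: "ck k \<Omega> f'" for k
    unfolding f'_def
    by (rule ck_Blinfun[OF O lin]) (use ck_SucD2 smooth_onD[OF sh] in blast)+
  have contf: "continuous_on \<Omega> f'" using ckf[of 0] by simp
  have invf: "id_blinfun o\<^sub>L f' y0 = id_blinfun"
    by (rule blinfun_eqI) (simp add: fa[OF y0] d0)
  obtain U' V g g' where U': "open U'" "U' \<subseteq> \<Omega>" "y0 \<in> U'" and V: "open V" "h y0 \<in> V"
    and hom: "homeomorphism U' V h g"
    and derg: "\<And>y. y \<in> V \<Longrightarrow> (g has_derivative (g' y)) (at y)"
    and g': "\<And>y. y \<in> V \<Longrightarrow> g' y = inv (blinfun_apply (f'(g y)))"
    and bij: "\<And>y. y \<in> V \<Longrightarrow> bij (blinfun_apply (f'(g y)))"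
    using inverse_function_theorem[OF O derf contf y0 invf] by blast
  have gV: "g ` V \<subseteq> \<Omega>" using hom U'(2) by (simp add: homeomorphism_def)
  have "ck k V g" for k
  proof (induction k)
    case 0 then show ?case using hom by (simp add: homeomorphism_def)
  next
    case (Suc k)
    have A: "ck k V (\<lambda>y. binv (f' (g y)))"
      by (rule ck_binv[OF V(1) bij ck_compose[OF V(1) O gV Suc.IH ckf]])
    show ?case
    proof (rule ck_SucI[OF V(1), where f'="\<lambda>y v. binv (f' (g y)) v"])
      fix y assume "y \<in> V"
      then show "(g has_derivative (\<lambda>v. binv (f' (g y)) v)) (at y)"
        using derg[of y] g'[of y] binv_apply[OF bij[of y]] by (simp add: fun_eq_iff)
    next
      fix v
      show "ck k V (\<lambda>y. binv (f' (g y)) v)"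
        by (rule ck_bilinear[OF V(1) bounded_bilinear_blinfun_apply A ck_const[OF V(1)]])
    qed
  qed
  then have "smooth_on V g" by (simp add: smooth_on_def)
  then show ?thesis using that U' V hom by blast
qed



lemma smooth_right_inverse:
  fixes F :: "'c::euclidean_space \<Rightarrow> 'b::euclidean_space"
  assumes O: "open \<Omega>" and sF: "smooth_on \<Omega> F" and a: "a \<in> \<Omega>"
    and surj: "range (frechet_derivative F (at a)) = UNIV"
  obtains V \<tau> where "open V" "F a \<in> V" "smooth_on V \<tau>" "\<tau> ` V \<subseteq> \<Omega>"
    "\<And>z. z \<in> V \<Longrightarrow> F (\<tau> z) = z" "\<tau> (F a) = a"
proof -
  define L where "L = frechet_derivative F (at a)"
  have dF: "(F has_derivative L) (at a)" unfolding L_def using smooth_on_has_derivative[OF sF a] .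
  have linL: "linear L" using dF has_derivative_linear by blast
  obtain K where linK: "linear K" and LK: "L \<circ> K = id"
    using linear_surjective_right_inverse[OF linL] surj unfolding L_def by blast
  have blK: "bounded_linear K" using linK linear_conv_bounded_linear by blast
  define b0 where "b0 = F a"
  define A where "A y = a + K (y - b0)" for y
  define \<Omega>' where "\<Omega>' = {y. A y \<in> \<Omega>}"
  have contA: "continuous_on UNIV A"
  proof -
    have "continuous_on UNIV (\<lambda>y. K (y - b0))"
      by (rule continuous_on_compose2[OF linear_continuous_on[OF blK]]) (auto intro: continuous_intros)
    then show ?thesis unfolding A_def by (intro continuous_intros)
  qed
  have O': "open \<Omega>'"
    unfolding \<Omega>'_def using continuous_on_open_vimage[OF open_UNIV, of A] contA O by (simp add: vimage_def)
  have Ab0: "A b0 = a" unfolding A_def using linear_0[OF linK] by simp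
  have b0: "b0 \<in> \<Omega>'" unfolding \<Omega>'_def using Ab0 a by simp
  have sA: "smooth_on S A" if "open S" for S
  proof -
    have "smooth_on S (\<lambda>y. a + K (y + (- b0)))"
      by (intro smooth_on_add smooth_on_const smooth_on_linear[OF that blK] smooth_on_id that)
    then show ?thesis unfolding A_def by simp
  qed
  define h where "h y = F (A y)" for y
  have sh: "smooth_on \<Omega>' h"
    unfolding h_def by (rule smooth_on_compose[OF O' O _ sA[OF O'] sF]) (auto simp: \<Omega>'_def)
  have dA: "(A has_derivative K) (at b0)"
  proof -
    have "((\<lambda>x. x - b0) has_derivative (\<lambda>h. h)) (at b0)" by (intro derivative_eq_intros) auto
    then have "((\<lambda>x. K (x - b0)) has_derivative (\<lambda>h. K h)) (at b0)" by (rule bounded_linear.has_derivative[OF blK])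
    from has_derivative_add[OF has_derivative_const this, of a]
    show ?thesis unfolding A_def by simp
  qed
  have "(h has_derivative (L \<circ> K)) (at b0)"
    unfolding h_def using diff_chain_at[OF dA, of F L] dF Ab0 by (simp add: o_def)
  then have d0: "frechet_derivative h (at b0) = id" using LK frechet_derivative_at by metis
  obtain U' V g where U': "open U'" "U' \<subseteq> \<Omega>'" "b0 \<in> U'" and V: "open V" "h b0 \<in> V"
    and hom: "homeomorphism U' V h g" and sg: "smooth_on V g"
    using smooth_local_inverse[OF O' sh b0 d0] by blast
  have hb0: "h b0 = b0" unfolding h_def b0_def using Ab0 by (simp add: b0_def)
  have gV: "g ` V \<subseteq> \<Omega>'" using hom U'(2) by (simp add: homeomorphism_def)
  show ?thesis
  proof (rule that[of V "\<lambda>z. A (g z)"])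
    show "open V" by (rule V)
    show "F a \<in> V" using V(2) hb0 by (simp add: b0_def)
    show "smooth_on V (\<lambda>z. A (g z))"
      by (rule smooth_on_compose[OF V(1) O' gV sg sA[OF O']])
    show "(\<lambda>z. A (g z)) ` V \<subseteq> \<Omega>" using gV by (auto simp: \<Omega>'_def)
    show "F (A (g z)) = z" if "z \<in> V" for z
      using hom that unfolding homeomorphism_def h_def by auto
    have "g b0 = b0" using hom U'(3) unfolding homeomorphism_def by (metis hb0)
    then show "A (g (F a)) = a" using Ab0 by (simp add: b0_def)
  qed
qed



definition charts_ok :: "'a topology \<Rightarrow> ('a set \<times> ('a \<Rightarrow> 'm::euclidean_space)) set \<Rightarrow> bool" where
  "charts_ok X A \<longleftrightarrow>
     (\<forall>(W,\<phi>)\<in>A. openin X W \<and> open (\<phi> ` W) \<and>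
                 homeomorphic_map (subtopology X W) (top_of_set (\<phi> ` W)) \<phi>) \<and>
     (\<forall>x\<in>topspace X. \<exists>(W,\<phi>)\<in>A. x \<in> W)"

lemma manifold_charts_ok: "smooth_manifold X A \<Longrightarrow> charts_ok X A"
  unfolding smooth_manifold_def charts_ok_def by blast

lemma charts_okD:
  assumes "charts_ok X A" "(W,\<phi>) \<in> A"
  shows "openin X W" "open (\<phi> ` W)" "homeomorphic_map (subtopology X W) (top_of_set (\<phi> ` W)) \<phi>"
  using assms unfolding charts_ok_def by auto

lemma charts_ok_cover:
  assumes "charts_ok X A" "x \<in> topspace X"
  obtains W \<phi> where "(W,\<phi>) \<in> A" "x \<in> W"
  using assms unfolding charts_ok_def by blast

lemma chart_inj:
  assumes "charts_ok X A" "(W,\<phi>) \<in> A"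
  shows "inj_on \<phi> W"
proof -
  have "W \<subseteq> topspace X" using charts_okD(1)[OF assms] openin_subset by blast
  then show ?thesis
    using homeomorphic_imp_injective_map[OF charts_okD(3)[OF assms]] by (simp add: Int_absorb1)
qed

lemma chart_inv:
  assumes "charts_ok X A" "(W,\<phi>) \<in> A" "x \<in> W"
  shows "inv_into W \<phi> (\<phi> x) = x"
  using chart_inj[OF assms(1,2)] assms(3) by (simp add: inv_into_f_f)

lemma chart_open_image:
  assumes "charts_ok X A" "(W,\<phi>) \<in> A" "openin X Z"
  shows "open (\<phi> ` (W \<inter> Z))"
proof -
  have WX: "W \<subseteq> topspace X" using charts_okD(1)[OF assms(1,2)] openin_subset by blast
  have "openin (subtopology X W) (W \<inter> Z)"
    using assms(3) by (auto simp: openin_subtopology)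
  moreover have "W \<inter> Z \<subseteq> topspace (subtopology X W)" using WX by auto
  ultimately have "openin (top_of_set (\<phi> ` W)) (\<phi> ` (W \<inter> Z))"
    using homeomorphic_map_openness[OF charts_okD(3)[OF assms(1,2)]] by blast
  then show ?thesis using openin_open_trans charts_okD(2)[OF assms(1,2)] by blast
qed

lemma chart_cont:
  assumes "charts_ok X A" "(W,\<phi>) \<in> A"
  shows "continuous_map (subtopology X W) euclidean \<phi>"
  using homeomorphic_imp_continuous_map[OF charts_okD(3)[OF assms]]
  by (simp add: continuous_map_in_subtopology)

lemma chart_inv_cont:
  assumes "charts_ok X A" "(W,\<phi>) \<in> A"
  shows "continuous_map (top_of_set (\<phi> ` W)) X (inv_into W \<phi>)"
proof -
  have WX: "W \<subseteq> topspace X" using charts_okD(1)[OF assms] openin_subset by blast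
  obtain g where g: "homeomorphic_maps (subtopology X W) (top_of_set (\<phi> ` W)) \<phi> g"
    using charts_okD(3)[OF assms] homeomorphic_map_maps by blast
  have cg: "continuous_map (top_of_set (\<phi> ` W)) (subtopology X W) g"
    using g by (simp add: homeomorphic_maps_def)
  have geq: "g y = inv_into W \<phi> y" if y: "y \<in> \<phi> ` W" for y
  proof -
    obtain x where x: "x \<in> W" "y = \<phi> x" using y by blast
    have gi: "\<forall>x\<in>topspace (subtopology X W). g (\<phi> x) = x"
      using g unfolding homeomorphic_maps_def by blast
    have "x \<in> topspace (subtopology X W)" using x(1) WX by auto
    then have "g (\<phi> x) = x" using gi by blast
    then show ?thesis using x chart_inv[OF assms x(1)] by simp
  qed
  then have "continuous_map (top_of_set (\<phi> ` W)) (subtopology X W) (inv_into W \<phi>)"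
    by (rule continuous_map_eq[OF cg]) (simp add: geq)
  then show ?thesis using continuous_map_in_subtopology by blast
qed

lemma open_preimage_cm:
  assumes "continuous_map (top_of_set D) Y f" "openin Y V" "open D"
  shows "open (D \<inter> f -` V)"
proof -
  have "openin (top_of_set D) {x \<in> topspace (top_of_set D). f x \<in> V}"
    using openin_continuous_map_preimage[OF assms(1,2)] .
  then have "openin (top_of_set D) (D \<inter> f -` V)" by (simp add: vimage_def Int_def)
  then show ?thesis using openin_open_trans assms(3) by blast
qed

lemma plot_compose:
  assumes cX: "charts_ok X A" and cY: "charts_ok Y B"
    and p: "mplot X A D p" and pO: "p ` D \<subseteq> Ob" and F: "smooth_map_on X A Y B Ob F"
  shows "mplot Y B D (\<lambda>r. F (p r))"
proof -
  have D: "open D" and pX: "p ` D \<subseteq> topspace X" and cp: "continuous_map (top_of_set D) X p"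
    and sp: "\<And>W \<phi>. (W,\<phi>) \<in> A \<Longrightarrow> smooth_on (D \<inter> p -` W) (\<phi> \<circ> p)"
    using p unfolding mplot_def by auto
  have Ob: "openin X Ob" and FY: "F ` Ob \<subseteq> topspace Y" and cF: "continuous_map (subtopology X Ob) Y F"
    and sF: "\<And>W \<phi> V \<psi>. (W,\<phi>) \<in> A \<Longrightarrow> (V,\<psi>) \<in> B \<Longrightarrow>
              smooth_on (\<phi> ` (W \<inter> Ob \<inter> F -` V)) (\<psi> \<circ> F \<circ> inv_into W \<phi>)"
    using F unfolding smooth_map_on_def by auto
  have cpO: "continuous_map (top_of_set D) (subtopology X Ob) p"
    by (intro continuous_map_into_subtopology cp) (use pO in auto)
  have cFp: "continuous_map (top_of_set D) Y (\<lambda>r. F (p r))"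
    using continuous_map_compose[OF cpO cF] by (simp add: o_def)
  show ?thesis unfolding mplot_def
  proof (intro conjI D cFp ballI)
    show "(\<lambda>r. F (p r)) ` D \<subseteq> topspace Y" using pO FY by blast
  next
    fix V\<psi> assume "V\<psi> \<in> B"
    then obtain V \<psi> where V\<psi>: "V\<psi> = (V, \<psi>)" "(V,\<psi>) \<in> B" by (cases V\<psi>) auto
    have VY: "openin Y V" using charts_okD(1)[OF cY V\<psi>(2)] .
    let ?S = "D \<inter> (\<lambda>r. F (p r)) -` V"
    have S: "open ?S" using open_preimage_cm[OF cFp VY D] .
    have Z: "openin X {x \<in> Ob. F x \<in> V}"
    proof -
      have T: "topspace (subtopology X Ob) = Ob" using Ob openin_subset by auto
      have "openin (subtopology X Ob) {x \<in> Ob. F x \<in> V}"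
        using openin_continuous_map_preimage[OF cF VY] unfolding T .
      then show ?thesis using openin_trans_full Ob by blast
    qed
    have "smooth_on ?S (\<psi> \<circ> (\<lambda>r. F (p r)))"
    proof (rule smooth_on_local[OF S])
      fix r assume r: "r \<in> ?S"
      have "p r \<in> topspace X" using r pX by (simp add: image_subset_iff)
      then obtain W \<phi> where W\<phi>: "(W,\<phi>) \<in> A" "p r \<in> W" using charts_ok_cover[OF cX] by blast
      have WX: "openin X W" using charts_okD(1)[OF cX W\<phi>(1)] .
      let ?Z = "W \<inter> {x \<in> Ob. F x \<in> V}"
      have ZX: "openin X ?Z" using openin_Int[OF WX Z] .
      let ?T = "D \<inter> p -` ?Z"
      have T: "open ?T" using open_preimage_cm[OF cp ZX D] .
      have rT: "r \<in> ?T" using r W\<phi>(2) pO by (simp add: image_subset_iff)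
      have TS: "?T \<subseteq> ?S" by (simp add: subset_iff)
      have img: "open (\<phi> ` (W \<inter> {x \<in> Ob. F x \<in> V}))" using chart_open_image[OF cX W\<phi>(1) Z] .
      have eqset: "W \<inter> Ob \<inter> F -` V = W \<inter> {x \<in> Ob. F x \<in> V}" by auto
      have s1: "smooth_on ?T (\<phi> \<circ> p)" by (rule smooth_on_subset[OF sp[OF W\<phi>(1)]]) (simp add: subset_iff)
      have s2: "smooth_on (\<phi> ` (W \<inter> {x \<in> Ob. F x \<in> V})) (\<psi> \<circ> F \<circ> inv_into W \<phi>)"
        using sF[OF W\<phi>(1) V\<psi>(2)] eqset by simp
      have s3: "smooth_on ?T (\<lambda>r. (\<psi> \<circ> F \<circ> inv_into W \<phi>) ((\<phi> \<circ> p) r))"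
        by (rule smooth_on_compose[OF T img _ s1 s2]) (auto simp: image_iff)
      have s4: "smooth_on ?T (\<psi> \<circ> (\<lambda>r. F (p r)))"
      proof (rule smooth_on_cong[OF T _ s3])
        fix x assume "x \<in> ?T"
        then have "p x \<in> W" by simp
        then show "(\<psi> \<circ> F \<circ> inv_into W \<phi>) ((\<phi> \<circ> p) x) = (\<psi> \<circ> (\<lambda>r. F (p r))) x"
          by (simp add: chart_inv[OF cX W\<phi>(1)])
      qed
      show "\<exists>T. open T \<and> r \<in> T \<and> smooth_on (?S \<inter> T) (\<psi> \<circ> (\<lambda>r. F (p r)))"
      proof (intro exI conjI)
        show "open ?T" "r \<in> ?T" using T rT .
        have "?S \<inter> ?T = ?T" using TS by (rule Int_absorb1)
        then show "smooth_on (?S \<inter> ?T) (\<psi> \<circ> (\<lambda>r. F (p r)))" using s4 by simp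
      qed
    qed
    then show "case V\<psi> of (W, \<phi>) \<Rightarrow> smooth_on (D \<inter> (\<lambda>r. F (p r)) -` W) (\<phi> \<circ> (\<lambda>r. F (p r)))"
      using V\<psi>(1) by simp
  qed
qed



lemma manifold_trans:
  assumes "smooth_manifold X A" "(W1,\<phi>1) \<in> A" "(W2,\<phi>2) \<in> A"
  shows "smooth_on (\<phi>1 ` (W1 \<inter> W2)) (\<phi>2 \<circ> inv_into W1 \<phi>1)"
  using assms unfolding smooth_manifold_def by blast

lemma section_plot:
  assumes mG: "smooth_manifold G AG" and mG0: "smooth_manifold G0 A0"
    and sub: "submersion G AG G0 A0 s"
    and g: "g \<in> topspace G" and q: "mplot G0 A0 D q" and r: "r \<in> D" and qr: "q r = s g"
  shows "\<exists>D' q'. open D' \<and> r \<in> D' \<and> D' \<subseteq> D \<and> mplot G AG D' q' \<and> q' r = g \<and>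
           (\<forall>r'\<in>D'. s (q' r') = q r')"
proof -
  have cG: "charts_ok G AG" and cG0: "charts_ok G0 A0" using mG mG0 manifold_charts_ok by auto
  have sm: "smooth_map G AG G0 A0 s" using sub unfolding submersion_def by blast
  have sY: "s ` topspace G \<subseteq> topspace G0" and cs: "continuous_map (subtopology G (topspace G)) G0 s"
    and ss: "\<And>W \<phi> V \<psi>. (W,\<phi>) \<in> AG \<Longrightarrow> (V,\<psi>) \<in> A0 \<Longrightarrow>
              smooth_on (\<phi> ` (W \<inter> topspace G \<inter> s -` V)) (\<psi> \<circ> s \<circ> inv_into W \<phi>)"
    using sm unfolding smooth_map_def smooth_map_on_def by auto
  have cs': "continuous_map G G0 s" using cs by simp
  obtain Wg \<kappa> where Wg: "(Wg,\<kappa>) \<in> AG" "g \<in> Wg" using charts_ok_cover[OF cG g] by blast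
  have sg: "s g \<in> topspace G0" using sY g by blast
  obtain W0 \<phi>0 where W0: "(W0,\<phi>0) \<in> A0" "s g \<in> W0" using charts_ok_cover[OF cG0 sg] by blast
  define F where "F = \<phi>0 \<circ> s \<circ> inv_into Wg \<kappa>"
  define \<Omega> where "\<Omega> = \<kappa> ` (Wg \<inter> topspace G \<inter> s -` W0)"
  have sF: "smooth_on \<Omega> F" unfolding F_def \<Omega>_def using ss[OF Wg(1) W0(1)] .
  have W0o: "openin G0 W0" using charts_okD(1)[OF cG0 W0(1)] .
  have Zo: "openin G {x \<in> topspace G. s x \<in> W0}" using openin_continuous_map_preimage[OF cs' W0o] .
  have setq: "Wg \<inter> topspace G \<inter> s -` W0 = Wg \<inter> {x \<in> topspace G. s x \<in> W0}" by auto
  have O: "open \<Omega>" unfolding \<Omega>_def setq using chart_open_image[OF cG Wg(1) Zo] .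
  have a: "\<kappa> g \<in> \<Omega>" unfolding \<Omega>_def using Wg(2) g W0(2) by blast
  have invg: "inv_into Wg \<kappa> (\<kappa> g) = g" using chart_inv[OF cG Wg] .
  have surj: "range (frechet_derivative F (at (\<kappa> g))) = UNIV"
    using sub g Wg W0 invg unfolding submersion_def F_def by fastforce
  obtain V \<tau> where V: "open V" "F (\<kappa> g) \<in> V" and st: "smooth_on V \<tau>" and tV: "\<tau> ` V \<subseteq> \<Omega>"
    and Ft: "\<And>z. z \<in> V \<Longrightarrow> F (\<tau> z) = z" and ta: "\<tau> (F (\<kappa> g)) = \<kappa> g"
    using smooth_right_inverse[OF O sF a surj] by blast
  have Fa: "F (\<kappa> g) = \<phi>0 (s g)" unfolding F_def using invg by simp
  have WgG: "Wg \<subseteq> topspace G" using charts_okD(1)[OF cG Wg(1)] openin_subset by blast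
  have W0G: "W0 \<subseteq> topspace G0" using W0o openin_subset by blast
  define Ob where "Ob = {x \<in> W0. \<phi>0 x \<in> V}"
  have Obo: "openin G0 Ob"
  proof -
    have T: "topspace (subtopology G0 W0) = W0" using W0G by auto
    have "openin (subtopology G0 W0) {x \<in> topspace (subtopology G0 W0). \<phi>0 x \<in> V}"
      using openin_continuous_map_preimage[OF chart_cont[OF cG0 W0(1)]] V(1) by simp
    then have "openin (subtopology G0 W0) Ob" unfolding Ob_def T .
    then show ?thesis using openin_trans_full W0o by blast
  qed
  have D: "open D" and qX: "q ` D \<subseteq> topspace G0" and cq: "continuous_map (top_of_set D) G0 q"
    and sq: "\<And>W \<phi>. (W,\<phi>) \<in> A0 \<Longrightarrow> smooth_on (D \<inter> q -` W) (\<phi> \<circ> q)"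
    using q unfolding mplot_def by auto
  define D' where "D' = D \<inter> q -` Ob"
  have D'o: "open D'" unfolding D'_def using open_preimage_cm[OF cq Obo D] .
  have rD': "r \<in> D'" unfolding D'_def Ob_def using r qr W0(2) V(2) Fa by simp
  define q' where "q' r' = inv_into Wg \<kappa> (\<tau> (\<phi>0 (q r')))" for r'
  have pt: "\<phi>0 (q r') \<in> V" "q r' \<in> W0" if "r' \<in> D'" for r'
    using that unfolding D'_def Ob_def by auto
  have tO: "\<tau> (\<phi>0 (q r')) \<in> \<Omega>" if "r' \<in> D'" for r'
    using tV pt[OF that] by blast
  have q'mem: "q' r' \<in> Wg" "q' r' \<in> topspace G" "s (q' r') \<in> W0" "\<kappa> (q' r') = \<tau> (\<phi>0 (q r'))"
    if rr: "r' \<in> D'" for r'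
  proof -
    obtain x where x: "x \<in> Wg \<inter> topspace G \<inter> s -` W0" "\<tau> (\<phi>0 (q r')) = \<kappa> x"
      using tO[OF rr] unfolding \<Omega>_def by blast
    have "q' r' = x" unfolding q'_def x(2) using chart_inv[OF cG Wg(1)] x(1) by blast
    then show "q' r' \<in> Wg" "q' r' \<in> topspace G" "s (q' r') \<in> W0" "\<kappa> (q' r') = \<tau> (\<phi>0 (q r'))"
      using x by auto
  qed
  have sq': "s (q' r') = q r'" if "r' \<in> D'" for r'
  proof -
    have "F (\<tau> (\<phi>0 (q r'))) = \<phi>0 (q r')" using Ft pt[OF that] by blast
    then have "\<phi>0 (s (q' r')) = \<phi>0 (q r')" unfolding F_def q'_def by simp
    moreover have "inj_on \<phi>0 W0" using chart_inj[OF cG0 W0(1)] .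
    ultimately show ?thesis using q'mem(3)[OF that] pt(2)[OF that] by (meson inj_onD)
  qed
  have q'r: "q' r = g" unfolding q'_def using qr Fa ta invg by simp
  have c1: "continuous_map (top_of_set D') (subtopology G0 W0) q"
  proof (rule continuous_map_into_subtopology)
    show "continuous_map (top_of_set D') G0 q"
      using continuous_map_from_subtopology[OF cq, of D'] D'_def by (simp add: subtopology_subtopology Int_absorb1)
    show "q \<in> topspace (top_of_set D') \<rightarrow> W0" using pt(2) by auto
  qed
  have c2: "continuous_map (top_of_set D') (top_of_set V) (\<lambda>r'. \<phi>0 (q r'))"
  proof (rule continuous_map_into_subtopology)
    show "continuous_map (top_of_set D') euclidean (\<lambda>r'. \<phi>0 (q r'))"
      using continuous_map_compose[OF c1 chart_cont[OF cG0 W0(1)]] by (simp add: o_def)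
    show "(\<lambda>r'. \<phi>0 (q r')) \<in> topspace (top_of_set D') \<rightarrow> V" using pt(1) by auto
  qed
  have c3: "continuous_map (top_of_set V) (top_of_set (\<kappa> ` Wg)) \<tau>"
  proof (rule continuous_map_into_subtopology)
    show "continuous_map (top_of_set V) euclidean \<tau>" using smooth_onD[OF st, of 0] by simp
    show "\<tau> \<in> topspace (top_of_set V) \<rightarrow> \<kappa> ` Wg" using tV unfolding \<Omega>_def by auto
  qed
  have cq': "continuous_map (top_of_set D') G q'"
    using continuous_map_compose[OF continuous_map_compose[OF c2 c3] chart_inv_cont[OF cG Wg(1)]]
    by (simp add: o_def q'_def[abs_def])
  have mq': "mplot G AG D' q'"
    unfolding mplot_def
  proof (intro conjI D'o cq' ballI)
    show "q' ` D' \<subseteq> topspace G" using q'mem(2) by blast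
  next
    fix W\<psi> assume "W\<psi> \<in> AG"
    then obtain W' \<psi> where W\<psi>: "W\<psi> = (W', \<psi>)" "(W',\<psi>) \<in> AG" by (cases W\<psi>) auto
    have W'o: "openin G W'" using charts_okD(1)[OF cG W\<psi>(2)] .
    define D'' where "D'' = D' \<inter> q' -` W'"
    have D''o: "open D''" unfolding D''_def using open_preimage_cm[OF cq' W'o D'o] .
    have s1: "smooth_on D'' (\<phi>0 \<circ> q)"
      by (rule smooth_on_subset[OF sq[OF W0(1)]]) (auto simp: D''_def D'_def Ob_def)
    have s2: "smooth_on D'' (\<lambda>r'. \<tau> ((\<phi>0 \<circ> q) r'))"
      by (rule smooth_on_compose[OF D''o V(1) _ s1 st]) (use pt(1) in \<open>auto simp: D''_def\<close>)
    have O2: "open (\<kappa> ` (Wg \<inter> W'))" using chart_open_image[OF cG Wg(1) W'o] .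
    have s3: "smooth_on (\<kappa> ` (Wg \<inter> W')) (\<psi> \<circ> inv_into Wg \<kappa>)"
      using manifold_trans[OF mG Wg(1) W\<psi>(2)] .
    have im: "(\<lambda>r'. \<tau> ((\<phi>0 \<circ> q) r')) ` D'' \<subseteq> \<kappa> ` (Wg \<inter> W')"
    proof
      fix y assume "y \<in> (\<lambda>r'. \<tau> ((\<phi>0 \<circ> q) r')) ` D''"
      then obtain r' where r': "r' \<in> D''" "y = \<tau> (\<phi>0 (q r'))" by auto
      have "r' \<in> D'" "q' r' \<in> W'" using r'(1) unfolding D''_def by auto
      then show "y \<in> \<kappa> ` (Wg \<inter> W')" using q'mem[OF \<open>r' \<in> D'\<close>] r'(2) by force
    qed
    have "smooth_on D'' (\<lambda>r'. (\<psi> \<circ> inv_into Wg \<kappa>) (\<tau> ((\<phi>0 \<circ> q) r')))"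
      by (rule smooth_on_compose[OF D''o O2 im s2 s3])
    then show "case W\<psi> of (W, \<phi>) \<Rightarrow> smooth_on (D' \<inter> q' -` W) (\<phi> \<circ> q')"
      using W\<psi>(1) unfolding D''_def by (simp add: q'_def[abs_def] o_def)
  qed
  show ?thesis
  proof (intro exI conjI ballI)
    show "open D'" "r \<in> D'" "mplot G AG D' q'" "q' r = g" using D'o rD' mq' q'r .
    show "D' \<subseteq> D" unfolding D'_def by blast
    show "s (q' r') = q r'" if "r' \<in> D'" for r' using sq'[OF that] .
  qed
qed



lemma mplot_subset:
  assumes "mplot X A D p" "open D'" "D' \<subseteq> D"
  shows "mplot X A D' p"
proof -
  have c: "continuous_map (top_of_set D) X p" using assms(1) unfolding mplot_def by blast
  have "continuous_map (subtopology (top_of_set D) D') X p" using continuous_map_from_subtopology[OF c] .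
  then have c': "continuous_map (top_of_set D') X p"
    using assms(3) by (simp add: subtopology_subtopology Int_absorb1)
  show ?thesis using assms c' unfolding mplot_def
    by (auto intro: smooth_on_subset)
qed

lemma orbit_equiv:
  assumes lg: "lie_groupoid G AG G0 A0 s t m u i" and V: "V \<subseteq> topspace G0"
  shows "equiv V (orbit_rel G s t V)"
proof -
  have ax1: "\<forall>g\<in>topspace G. s g \<in> topspace G0 \<and> t g \<in> topspace G0 \<and> i g \<in> topspace G"
    and ax2: "\<forall>x\<in>topspace G0. u x \<in> topspace G \<and> s (u x) = x \<and> t (u x) = x"
    and ax3: "\<forall>g\<in>topspace G. \<forall>h\<in>topspace G. s g = t h \<longrightarrow>
        m g h \<in> topspace G \<and> s (m g h) = s h \<and> t (m g h) = t g"
    and ax4: "\<forall>g\<in>topspace G. s (i g) = t g \<and> t (i g) = s g \<and>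
        m (i g) g = u (s g) \<and> m g (i g) = u (t g)"
    using lg unfolding lie_groupoid_def by blast+
  show ?thesis unfolding equiv_def refl_on_def sym_def trans_def
  proof (intro conjI allI impI ballI)
    show "orbit_rel G s t V \<subseteq> V \<times> V" unfolding orbit_rel_def by auto
  next
    fix x assume x: "x \<in> V"
    then have "x \<in> topspace G0" using V by blast
    then show "(x, x) \<in> orbit_rel G s t V" using ax2 x unfolding orbit_rel_def by blast
  next
    fix x y assume "(x, y) \<in> orbit_rel G s t V"
    then obtain g where g: "x \<in> V" "y \<in> V" "g \<in> topspace G" "s g = x" "t g = y"
      unfolding orbit_rel_def by blast
    have "i g \<in> topspace G" "s (i g) = y" "t (i g) = x" using ax1 ax4 g by auto
    then show "(y, x) \<in> orbit_rel G s t V" using g unfolding orbit_rel_def by blast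
  next
    fix x y z assume "(x, y) \<in> orbit_rel G s t V" "(y, z) \<in> orbit_rel G s t V"
    then obtain g h where g: "x \<in> V" "y \<in> V" "g \<in> topspace G" "s g = x" "t g = y"
      and h: "z \<in> V" "h \<in> topspace G" "s h = y" "t h = z"
      unfolding orbit_rel_def by blast
    have "m h g \<in> topspace G" "s (m h g) = x" "t (m h g) = z" using ax3 g h by auto
    then show "(x, z) \<in> orbit_rel G s t V" using g h unfolding orbit_rel_def by blast
  qed
qed



lemma part1:
  fixes G :: "'g topology" and AG :: "('g set \<times> ('g \<Rightarrow> 'c::euclidean_space)) set"
    and G0 :: "'o topology" and A0 :: "('o set \<times> ('o \<Rightarrow> 'b::euclidean_space)) set"
  assumes lg: "lie_groupoid G AG G0 A0 s t m u i" and U: "openin G0 U"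
  shows "let R = orbit_rel G s t (topspace G0);
          RU = orbit_rel G s t U;
          \<pi> = (\<lambda>x. R `` {x});
          f = induced_map R
      in bij_betw f (U // RU) (\<pi> ` U) \<and>
         (\<forall>(D :: 'n::euclidean_space set) P. P ` D \<subseteq> U // RU \<longrightarrow>
            (qplot G0 A0 U RU D P \<longleftrightarrow>
             subset_plot (qplot G0 A0 (topspace G0) R) (\<pi> ` U) D (f \<circ> P)))"
proof -
  define R where "R = orbit_rel G s t (topspace G0)"
  define RU where "RU = orbit_rel G s t U"
  define f where "f = induced_map R"
  have mG: "smooth_manifold G AG" and mG0: "smooth_manifold G0 A0"
    and sub: "submersion G AG G0 A0 s" and tsm: "smooth_map G AG G0 A0 t"
    using lg unfolding lie_groupoid_def by blast+
  have ax1: "\<forall>g\<in>topspace G. s g \<in> topspace G0 \<and> t g \<in> topspace G0"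
    using lg unfolding lie_groupoid_def by blast
  have cG: "charts_ok G AG" and cG0: "charts_ok G0 A0" using mG mG0 manifold_charts_ok by auto
  have UX: "U \<subseteq> topspace G0" using U openin_subset by blast
  have eqR: "equiv (topspace G0) R" unfolding R_def using orbit_equiv[OF lg order_refl] .
  have eqRU: "equiv U RU" unfolding RU_def using orbit_equiv[OF lg UX] .
  have RUR: "(x, y) \<in> RU \<Longrightarrow> (x, y) \<in> R" for x y
    unfolding RU_def R_def orbit_rel_def using UX by blast
  have RRU: "(x, y) \<in> R \<Longrightarrow> x \<in> U \<Longrightarrow> y \<in> U \<Longrightarrow> (x, y) \<in> RU" for x y
    unfolding RU_def R_def orbit_rel_def by blast
  have fcl: "f (RU `` {x}) = R `` {x}" if x: "x \<in> U" for x
  proof -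
    have "x \<in> RU `` {x}" using equiv_class_self[OF eqRU x] .
    then have "(SOME y. y \<in> RU `` {x}) \<in> RU `` {x}" by (rule someI)
    then have "(x, SOME y. y \<in> RU `` {x}) \<in> R" using RUR by blast
    then have "R `` {x} = R `` {SOME y. y \<in> RU `` {x}}" using equiv_class_eq[OF eqR] by blast
    then show ?thesis unfolding f_def induced_map_def by simp
  qed
  have bij: "bij_betw f (U // RU) ((\<lambda>x. R `` {x}) ` U)"
    unfolding bij_betw_def
  proof
    show "inj_on f (U // RU)"
    proof (rule inj_onI)
      fix X Y assume X: "X \<in> U // RU" and Y: "Y \<in> U // RU" and fXY: "f X = f Y"
      obtain x where x: "x \<in> U" "X = RU `` {x}" using X by (auto elim: quotientE)
      obtain y where y: "y \<in> U" "Y = RU `` {y}" using Y by (auto elim: quotientE)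
      have "R `` {x} = R `` {y}" using fXY fcl x y by simp
      then have "(x, y) \<in> R" using eq_equiv_class[OF _ eqR] y(1) UX by blast
      then have "(x, y) \<in> RU" using RRU x y by blast
      then show "X = Y" using x y equiv_class_eq[OF eqRU] by simp
    qed
    show "f ` (U // RU) = (\<lambda>x. R `` {x}) ` U"
    proof
      show "f ` (U // RU) \<subseteq> (\<lambda>x. R `` {x}) ` U"
        using fcl by (auto elim!: quotientE)
      show "(\<lambda>x. R `` {x}) ` U \<subseteq> f ` (U // RU)"
      proof
        fix c assume "c \<in> (\<lambda>x. R `` {x}) ` U"
        then obtain x where x: "x \<in> U" "c = R `` {x}" by blast
        then have "c = f (RU `` {x})" using fcl by simp
        moreover have "RU `` {x} \<in> U // RU" using x(1) by (rule quotientI)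
        ultimately show "c \<in> f ` (U // RU)" by blast
      qed
    qed
  qed
  have plots: "qplot G0 A0 U RU D P \<longleftrightarrow>
             subset_plot (qplot G0 A0 (topspace G0) R) ((\<lambda>x. R `` {x}) ` U) D (f \<circ> P)"
    if PD: "P ` D \<subseteq> U // RU" for D :: "'n::euclidean_space set" and P
  proof
    assume qp: "qplot G0 A0 U RU D P"
    have "(f \<circ> P) ` D \<subseteq> (\<lambda>x. R `` {x}) ` U"
    proof
      fix c assume "c \<in> (f \<circ> P) ` D"
      then obtain r where r: "r \<in> D" "c = f (P r)" by auto
      then have "P r \<in> U // RU" using PD by blast
      then obtain x where "x \<in> U" "P r = RU `` {x}" by (auto elim: quotientE)
      then show "c \<in> (\<lambda>x. R `` {x}) ` U" using r fcl by simp
    qed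
    moreover have "qplot G0 A0 (topspace G0) R D (f \<circ> P)"
      unfolding qplot_def
    proof (intro conjI ballI)
      show "open D" using qp unfolding qplot_def by blast
      fix r assume r: "r \<in> D"
      then obtain D' q where q: "r \<in> D'" "D' \<subseteq> D" "mplot G0 A0 D' q" "q ` D' \<subseteq> U"
        "\<forall>r'\<in>D'. P r' = RU `` {q r'}"
        using qp unfolding qplot_def by blast
      show "\<exists>D' q. r \<in> D' \<and> D' \<subseteq> D \<and> mplot G0 A0 D' q \<and> q ` D' \<subseteq> topspace G0 \<and>
                  (\<forall>r'\<in>D'. (f \<circ> P) r' = R `` {q r'})"
      proof (intro exI conjI ballI)
        show "r \<in> D'" "D' \<subseteq> D" "mplot G0 A0 D' q" using q by auto
        show "q ` D' \<subseteq> topspace G0" using q(4) UX by blast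
        fix r' assume "r' \<in> D'"
        then show "(f \<circ> P) r' = R `` {q r'}" using q(4,5) fcl by auto
      qed
    qed
    ultimately show "subset_plot (qplot G0 A0 (topspace G0) R) ((\<lambda>x. R `` {x}) ` U) D (f \<circ> P)"
      unfolding subset_plot_def by blast
  next
    assume sp: "subset_plot (qplot G0 A0 (topspace G0) R) ((\<lambda>x. R `` {x}) ` U) D (f \<circ> P)"
    then have qp: "qplot G0 A0 (topspace G0) R D (f \<circ> P)" unfolding subset_plot_def by blast
    show "qplot G0 A0 U RU D P"
      unfolding qplot_def
    proof (intro conjI ballI)
      show D: "open D" using qp unfolding qplot_def by blast
      fix r assume r: "r \<in> D"
      obtain D1 q where q: "r \<in> D1" "D1 \<subseteq> D" "mplot G0 A0 D1 q" "q ` D1 \<subseteq> topspace G0"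
        and q5': "\<forall>r'\<in>D1. (f \<circ> P) r' = R `` {q r'}"
        using qp r unfolding qplot_def by blast
      have q5: "\<And>r'. r' \<in> D1 \<Longrightarrow> f (P r') = R `` {q r'}" using q5' by simp
      have "P r \<in> U // RU" using PD r by blast
      then obtain x0 where x0: "x0 \<in> U" "P r = RU `` {x0}" by (auto elim: quotientE)
      have "R `` {q r} = R `` {x0}" using q5[OF q(1)] x0 fcl by simp
      then have "(q r, x0) \<in> R" using eq_equiv_class[OF _ eqR] x0(1) UX by blast
      then obtain g where g: "g \<in> topspace G" "s g = q r" "t g = x0"
        unfolding R_def orbit_rel_def by blast
      obtain D2 q2 where q2: "open D2" "r \<in> D2" "D2 \<subseteq> D1" "mplot G AG D2 q2" "q2 r = g"
        "\<And>r'. r' \<in> D2 \<Longrightarrow> s (q2 r') = q r'"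
        using section_plot[OF mG mG0 sub g(1) q(3) q(1) g(2)[symmetric]] by blast
      have tsm': "smooth_map_on G AG G0 A0 (topspace G) t" using tsm unfolding smooth_map_def .
      have q2G: "q2 ` D2 \<subseteq> topspace G" using q2(4) unfolding mplot_def by blast
      have m3: "mplot G0 A0 D2 (\<lambda>r'. t (q2 r'))"
        using plot_compose[OF cG cG0 q2(4) q2G tsm'] .
      have c3: "continuous_map (top_of_set D2) G0 (\<lambda>r'. t (q2 r'))" using m3 unfolding mplot_def by blast
      define D3 where "D3 = D2 \<inter> (\<lambda>r'. t (q2 r')) -` U"
      have D3: "open D3" unfolding D3_def using open_preimage_cm[OF c3 U q2(1)] .
      have rD3: "r \<in> D3" unfolding D3_def using q2(2,5) g(3) x0(1) by simp
      show "\<exists>D' q. r \<in> D' \<and> D' \<subseteq> D \<and> mplot G0 A0 D' q \<and> q ` D' \<subseteq> U \<and>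
                  (\<forall>r'\<in>D'. P r' = RU `` {q r'})"
      proof (intro exI conjI ballI)
        show "r \<in> D3" by (rule rD3)
        show "D3 \<subseteq> D" unfolding D3_def using q2(3) q(2) by blast
        show "mplot G0 A0 D3 (\<lambda>r'. t (q2 r'))"
          by (rule mplot_subset[OF m3 D3]) (auto simp: D3_def)
        show "(\<lambda>r'. t (q2 r')) ` D3 \<subseteq> U" unfolding D3_def by blast
        fix r' assume r': "r' \<in> D3"
        have r'2: "r' \<in> D2" "t (q2 r') \<in> U" using r' unfolding D3_def by auto
        have r'D: "r' \<in> D" using r'2(1) q2(3) q(2) by blast
        have "P r' \<in> U // RU" using PD r'D by blast
        then obtain z where z: "z \<in> U" "P r' = RU `` {z}" by (auto elim: quotientE)
        have "R `` {z} = R `` {q r'}" using q5[of r'] r'2(1) q2(3) z fcl by auto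
        then have zq: "(z, q r') \<in> R"
          using eq_equiv_class[OF _ eqR] q(4) r'2(1) q2(3) by blast
        have "q2 r' \<in> topspace G" using q2G r'2(1) by blast
        then have a1: "q r' \<in> topspace G0" "t (q2 r') \<in> topspace G0"
          using q2(6)[OF r'2(1)] ax1 by metis+
        have "(q r', t (q2 r')) \<in> R"
          unfolding R_def orbit_rel_def using a1 q2(6)[OF r'2(1)] \<open>q2 r' \<in> topspace G\<close>
          by (simp add: case_prod_beta) (metis)
        then have "(z, t (q2 r')) \<in> R" using zq eqR unfolding equiv_def trans_def by blast
        then have "(z, t (q2 r')) \<in> RU" using RRU z(1) r'2(2) by blast
        then show "P r' = RU `` {t (q2 r')}" using z(2) equiv_class_eq[OF eqRU] by simp
      qed
    qed
  qed
  show ?thesis unfolding Let_def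
    using bij plots unfolding R_def[symmetric] RU_def[symmetric] f_def[symmetric] by blast
qed



lemma prod_charts_ok:
  assumes cH: "charts_ok H AH" and cM: "charts_ok M AM"
  shows "charts_ok (prod_topology H M) (prod_atlas AH AM)"
  unfolding charts_ok_def
proof (intro conjI ballI)
  fix C assume "C \<in> prod_atlas AH AM"
  then obtain W \<phi> V \<psi> where C: "C = (W \<times> V, \<lambda>(a,b). (\<phi> a, \<psi> b))" and W: "(W,\<phi>) \<in> AH"
    and V: "(V,\<psi>) \<in> AM" unfolding prod_atlas_def by blast
  have img: "(\<lambda>(a,b). (\<phi> a, \<psi> b)) ` (W \<times> V) = \<phi> ` W \<times> \<psi> ` V" by auto
  have o1: "openin (prod_topology H M) (W \<times> V)"
    using charts_okD(1)[OF cH W] charts_okD(1)[OF cM V] by (simp add: openin_prod_Times_iff)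
  have o2: "open (\<phi> ` W \<times> \<psi> ` V)"
    using charts_okD(2)[OF cH W] charts_okD(2)[OF cM V] by (simp add: open_Times)
  obtain \<phi>' where h1: "homeomorphic_maps (subtopology H W) (top_of_set (\<phi> ` W)) \<phi> \<phi>'"
    using charts_okD(3)[OF cH W] homeomorphic_map_maps by blast
  obtain \<psi>' where h2: "homeomorphic_maps (subtopology M V) (top_of_set (\<psi> ` V)) \<psi> \<psi>'"
    using charts_okD(3)[OF cM V] homeomorphic_map_maps by blast
  have "homeomorphic_maps (prod_topology (subtopology H W) (subtopology M V))
          (prod_topology (top_of_set (\<phi> ` W)) (top_of_set (\<psi> ` V)))
          (\<lambda>(x,y). (\<phi> x, \<psi> y)) (\<lambda>(x,y). (\<phi>' x, \<psi>' y))"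
    unfolding homeomorphic_maps_prod using h1 h2 by blast
  then have "homeomorphic_maps (subtopology (prod_topology H M) (W \<times> V)) (top_of_set (\<phi> ` W \<times> \<psi> ` V))
          (\<lambda>(x,y). (\<phi> x, \<psi> y)) (\<lambda>(x,y). (\<phi>' x, \<psi>' y))"
    by (simp add: subtopology_Times)
  then have "homeomorphic_map (subtopology (prod_topology H M) (W \<times> V)) (top_of_set (\<phi> ` W \<times> \<psi> ` V))
          (\<lambda>(x,y). (\<phi> x, \<psi> y))"
    unfolding homeomorphic_map_maps by blast
  then show "case C of (W, \<phi>) \<Rightarrow> openin (prod_topology H M) W \<and> open (\<phi> ` W) \<and>
      homeomorphic_map (subtopology (prod_topology H M) W) (top_of_set (\<phi> ` W)) \<phi>"
    unfolding C img[symmetric] using o1 o2 img by simp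
next
  fix x assume "x \<in> topspace (prod_topology H M)"
  then obtain a b where x: "x = (a, b)" "a \<in> topspace H" "b \<in> topspace M" by auto
  obtain W \<phi> where W: "(W,\<phi>) \<in> AH" "a \<in> W" using charts_ok_cover[OF cH x(2)] by blast
  obtain V \<psi> where V: "(V,\<psi>) \<in> AM" "b \<in> V" using charts_ok_cover[OF cM x(3)] by blast
  have "(W \<times> V, \<lambda>(a,b). (\<phi> a, \<psi> b)) \<in> prod_atlas AH AM" unfolding prod_atlas_def using W V by blast
  moreover have "x \<in> W \<times> V" using x W V by simp
  ultimately show "\<exists>(W, \<phi>)\<in>prod_atlas AH AM. x \<in> W" by (intro bexI[of _ "(W \<times> V, \<lambda>(a,b). (\<phi> a, \<psi> b))"]) simp_all
qed

lemma const_pair_plot: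
  assumes p: "mplot M AM D q" and g: "g \<in> topspace H" and cM: "charts_ok M AM"
  shows "mplot (prod_topology H M) (prod_atlas AH AM) D (\<lambda>r. (g, q r))"
proof -
  have D: "open D" and qX: "q ` D \<subseteq> topspace M" and cq: "continuous_map (top_of_set D) M q"
    and sq: "\<And>W \<phi>. (W,\<phi>) \<in> AM \<Longrightarrow> smooth_on (D \<inter> q -` W) (\<phi> \<circ> q)"
    using p unfolding mplot_def by auto
  show ?thesis unfolding mplot_def
  proof (intro conjI D ballI)
    show "(\<lambda>r. (g, q r)) ` D \<subseteq> topspace (prod_topology H M)" using qX g by auto
    show "continuous_map (top_of_set D) (prod_topology H M) (\<lambda>r. (g, q r))"
      using cq g by (simp add: continuous_map_paired)
  next
    fix C assume "C \<in> prod_atlas AH AM"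
    then obtain W \<phi> V \<psi> where C: "C = (W \<times> V, \<lambda>(a,b). (\<phi> a, \<psi> b))" and W: "(W,\<phi>) \<in> AH"
      and V: "(V,\<psi>) \<in> AM" unfolding prod_atlas_def by blast
    have fe: "((\<lambda>(a,b). (\<phi> a, \<psi> b)) \<circ> (\<lambda>r. (g, q r))) = (\<lambda>r. (\<phi> g, \<psi> (q r)))"
      by (simp add: o_def)
    have "smooth_on (D \<inter> (\<lambda>r. (g, q r)) -` (W \<times> V)) (\<lambda>r. (\<phi> g, \<psi> (q r)))"
    proof (cases "g \<in> W")
      case True
      have eq: "D \<inter> (\<lambda>r. (g, q r)) -` (W \<times> V) = D \<inter> q -` V" using True by auto
      have o: "open (D \<inter> q -` V)" using open_preimage_cm[OF cq charts_okD(1)[OF cM V] D] .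
      have "smooth_on (D \<inter> q -` V) (\<lambda>r. \<psi> (q r))" using sq[OF V] by (simp add: o_def)
      then show ?thesis unfolding eq by (intro smooth_on_pair o smooth_on_const)
    next
      case False
      then have "D \<inter> (\<lambda>r. (g, q r)) -` (W \<times> V) = {}" by auto
      then show ?thesis by (simp add: smooth_on_empty)
    qed
    then show "case C of (W, \<phi>) \<Rightarrow> smooth_on (D \<inter> (\<lambda>r. (g, q r)) -` W) (\<phi> \<circ> (\<lambda>r. (g, q r)))"
      using C fe by simp
  qed
qed



lemma part2:
  fixes H :: "'h topology" and AH :: "('h set \<times> ('h \<Rightarrow> 'd::euclidean_space)) set"
    and M :: "'a topology" and AM :: "('a set \<times> ('a \<Rightarrow> 'k::euclidean_space)) set"
  assumes lg: "lie_group H AH mul ginv e" and mM: "smooth_manifold M AM"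
    and act: "smooth_action H AH mul e M AM act" and V: "openin M V"
  shows "let R = action_orbit_rel H M act;
          \<pi> = (\<lambda>x. R `` {x})
      in \<forall>(D :: 'p::euclidean_space set) P.
           (P ` D \<subseteq> \<pi> ` V \<and> qplot M AM V R D P) \<longleftrightarrow>
           subset_plot (qplot M AM (topspace M) R) (\<pi> ` V) D P"
proof -
  define R where "R = action_orbit_rel H M act"
  have mH: "smooth_manifold H AH" and eH: "e \<in> topspace H"
    and ginvH: "\<And>g. g \<in> topspace H \<Longrightarrow> ginv g \<in> topspace H \<and> mul (ginv g) g = e"
    and mulH: "\<And>g h. g \<in> topspace H \<Longrightarrow> h \<in> topspace H \<Longrightarrow> mul g h \<in> topspace H"
    using lg unfolding lie_group_def by blast+
  have ae: "\<And>x. x \<in> topspace M \<Longrightarrow> act e x = x"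
    and am: "\<And>g h x. g \<in> topspace H \<Longrightarrow> h \<in> topspace H \<Longrightarrow> x \<in> topspace M \<Longrightarrow>
               act (mul g h) x = act g (act h x)"
    and asm: "smooth_map (prod_topology H M) (prod_atlas AH AM) M AM (\<lambda>(g,x). act g x)"
    using act unfolding smooth_action_def by blast+
  have asm': "smooth_map_on (prod_topology H M) (prod_atlas AH AM) M AM (topspace (prod_topology H M))
      (\<lambda>(g,x). act g x)" using asm unfolding smooth_map_def .
  have aM: "act g x \<in> topspace M" if "g \<in> topspace H" "x \<in> topspace M" for g x
  proof -
    have "(\<lambda>(g,x). act g x) ` topspace (prod_topology H M) \<subseteq> topspace M"
      using asm' unfolding smooth_map_on_def by blast
    then show ?thesis using that by force
  qed
  have cH: "charts_ok H AH" and cM: "charts_ok M AM" using mH mM manifold_charts_ok by auto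
  have VM: "V \<subseteq> topspace M" using V openin_subset by blast
  have Rcl: "R `` {x} = {act h x | h. h \<in> topspace H}" if "x \<in> topspace M" for x
    using that unfolding R_def action_orbit_rel_def by auto
  have Rinv: "R `` {act g x} = R `` {x}" if g: "g \<in> topspace H" and x: "x \<in> topspace M" for g x
  proof
    show "R `` {act g x} \<subseteq> R `` {x}"
    proof
      fix y assume "y \<in> R `` {act g x}"
      then obtain h where h: "h \<in> topspace H" "y = act h (act g x)" using Rcl[OF aM[OF g x]] by blast
      then have "y = act (mul h g) x" using am g x by simp
      then show "y \<in> R `` {x}" using Rcl[OF x] mulH[OF h(1) g] by blast
    qed
    show "R `` {x} \<subseteq> R `` {act g x}"
    proof
      fix y assume "y \<in> R `` {x}"
      then obtain h where h: "h \<in> topspace H" "y = act h x" using Rcl[OF x] by blast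
      have gi: "ginv g \<in> topspace H" "mul (ginv g) g = e" using ginvH[OF g] by auto
      have "act (mul h (ginv g)) (act g x) = act h (act (ginv g) (act g x))"
        using am[OF h(1) gi(1) aM[OF g x]] .
      also have "act (ginv g) (act g x) = x" using am[OF gi(1) g x] gi(2) ae[OF x] by simp
      finally have "y = act (mul h (ginv g)) (act g x)" using h by simp
      then show "y \<in> R `` {act g x}" using Rcl[OF aM[OF g x]] mulH[OF h(1) gi(1)] by blast
    qed
  qed
  have main: "(P ` D \<subseteq> (\<lambda>x. R `` {x}) ` V \<and> qplot M AM V R D P) \<longleftrightarrow>
           subset_plot (qplot M AM (topspace M) R) ((\<lambda>x. R `` {x}) ` V) D P"
    for D :: "'p::euclidean_space set" and P
  proof
    assume a: "P ` D \<subseteq> (\<lambda>x. R `` {x}) ` V \<and> qplot M AM V R D P"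
    have "qplot M AM (topspace M) R D P"
      using a VM unfolding qplot_def by (meson order_trans)
    then show "subset_plot (qplot M AM (topspace M) R) ((\<lambda>x. R `` {x}) ` V) D P"
      using a unfolding subset_plot_def by blast
  next
    assume sp: "subset_plot (qplot M AM (topspace M) R) ((\<lambda>x. R `` {x}) ` V) D P"
    have PD: "P ` D \<subseteq> (\<lambda>x. R `` {x}) ` V" and qp: "qplot M AM (topspace M) R D P"
      using sp unfolding subset_plot_def by auto
    have "qplot M AM V R D P"
      unfolding qplot_def
    proof (intro conjI ballI)
      show D: "open D" using qp unfolding qplot_def by blast
      fix r assume r: "r \<in> D"
      obtain D1 q where q: "r \<in> D1" "D1 \<subseteq> D" "mplot M AM D1 q" "q ` D1 \<subseteq> topspace M"
        and q5: "\<forall>r'\<in>D1. P r' = R `` {q r'}"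
        using qp r unfolding qplot_def by blast
      obtain v where v: "v \<in> V" "P r = R `` {v}" using PD r by blast
      have vM: "v \<in> topspace M" using v VM by blast
      have "v \<in> R `` {v}" using Rcl[OF vM] ae[OF vM] eH by force
      then have "v \<in> R `` {q r}" using v q5 q(1) by simp
      moreover have qrM: "q r \<in> topspace M" using q(1,4) by blast
      ultimately obtain g where g: "g \<in> topspace H" "v = act g (q r)" using Rcl by blast
      have m1: "mplot (prod_topology H M) (prod_atlas AH AM) D1 (\<lambda>r. (g, q r))"
        using const_pair_plot[OF q(3) g(1) cM] .
      have im: "(\<lambda>r. (g, q r)) ` D1 \<subseteq> topspace (prod_topology H M)" using q(4) g(1) by auto
      have m2: "mplot M AM D1 (\<lambda>r'. act g (q r'))"
        using plot_compose[OF prod_charts_ok[OF cH cM] cM m1 im asm'] by simp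
      have c2: "continuous_map (top_of_set D1) M (\<lambda>r'. act g (q r'))" using m2 unfolding mplot_def by blast
      have D1: "open D1" using q(3) unfolding mplot_def by blast
      define D2 where "D2 = D1 \<inter> (\<lambda>r'. act g (q r')) -` V"
      have D2: "open D2" unfolding D2_def using open_preimage_cm[OF c2 V D1] .
      show "\<exists>D' q. r \<in> D' \<and> D' \<subseteq> D \<and> mplot M AM D' q \<and> q ` D' \<subseteq> V \<and>
                  (\<forall>r'\<in>D'. P r' = R `` {q r'})"
      proof (intro exI conjI ballI)
        show "r \<in> D2" unfolding D2_def using q(1) g v by simp
        show "D2 \<subseteq> D" unfolding D2_def using q(2) by blast
        show "mplot M AM D2 (\<lambda>r'. act g (q r'))" by (rule mplot_subset[OF m2 D2]) (auto simp: D2_def)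
        show "(\<lambda>r'. act g (q r')) ` D2 \<subseteq> V" unfolding D2_def by blast
        fix r' assume "r' \<in> D2"
        then have r': "r' \<in> D1" unfolding D2_def by blast
        then have "q r' \<in> topspace M" using q(4) by blast
        then show "P r' = R `` {act g (q r')}" using q5 r' Rinv[OF g(1)] by simp
      qed
    qed
    then show "P ` D \<subseteq> (\<lambda>x. R `` {x}) ` V \<and> qplot M AM V R D P" using PD by blast
  qed
  show ?thesis unfolding Let_def R_def[symmetric] using main by blast
qed


theorem lemma5:
  shows
  "(\<forall>(G :: 'g topology) (AG :: ('g set \<times> ('g \<Rightarrow> 'c::euclidean_space)) set)
      (G0 :: 'o topology) (A0 :: ('o set \<times> ('o \<Rightarrow> 'b::euclidean_space)) set)
      s t m u i U.
     lie_groupoid G AG G0 A0 s t m u i \<and> openin G0 U \<longrightarrow>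
     (let R = orbit_rel G s t (topspace G0);
          RU = orbit_rel G s t U;
          \<pi> = (\<lambda>x. R `` {x});
          f = induced_map R
      in bij_betw f (U // RU) (\<pi> ` U) \<and>
         (\<forall>(D :: 'n::euclidean_space set) P. P ` D \<subseteq> U // RU \<longrightarrow>
            (qplot G0 A0 U RU D P \<longleftrightarrow>
             subset_plot (qplot G0 A0 (topspace G0) R) (\<pi> ` U) D (f \<circ> P)))))
   \<and>
   (\<forall>(H :: 'h topology) (AH :: ('h set \<times> ('h \<Rightarrow> 'd::euclidean_space)) set) mul ginv e
      (M :: 'a topology) (AM :: ('a set \<times> ('a \<Rightarrow> 'k::euclidean_space)) set) act V.
     lie_group H AH mul ginv e \<and> smooth_manifold M AM \<and> Hausdorff_space M \<and>
     second_countable M \<and> smooth_action H AH mul e M AM act \<and> openin M V \<longrightarrow>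
     (let R = action_orbit_rel H M act;
          \<pi> = (\<lambda>x. R `` {x})
      in \<forall>(D :: 'p::euclidean_space set) P.
           (P ` D \<subseteq> \<pi> ` V \<and> qplot M AM V R D P) \<longleftrightarrow>
           subset_plot (qplot M AM (topspace M) R) (\<pi> ` V) D P))"
  proof (intro conjI allI impI)
  fix G :: "'g topology" and AG :: "('g set \<times> ('g \<Rightarrow> 'c::euclidean_space)) set"
    and G0 :: "'o topology" and A0 :: "('o set \<times> ('o \<Rightarrow> 'b::euclidean_space)) set"
    and s t m u i U
  assume a: "lie_groupoid G AG G0 A0 s t m u i \<and> openin G0 U"
  show "let R = orbit_rel G s t (topspace G0);
          RU = orbit_rel G s t U;
          \<pi> = (\<lambda>x. R `` {x});
          f = induced_map R
      in bij_betw f (U // RU) (\<pi> ` U) \<and>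
         (\<forall>(D :: 'n::euclidean_space set) P. P ` D \<subseteq> U // RU \<longrightarrow>
            (qplot G0 A0 U RU D P \<longleftrightarrow>
             subset_plot (qplot G0 A0 (topspace G0) R) (\<pi> ` U) D (f \<circ> P)))"
    using part1[of G AG G0 A0 s t m u i U] a by blast
next
  fix H :: "'h topology" and AH :: "('h set \<times> ('h \<Rightarrow> 'd::euclidean_space)) set"
    and mul ginv e
    and M :: "'a topology" and AM :: "('a set \<times> ('a \<Rightarrow> 'k::euclidean_space)) set"
    and act V
  assume a: "lie_group H AH mul ginv e \<and> smooth_manifold M AM \<and> Hausdorff_space M \<and>
     second_countable M \<and> smooth_action H AH mul e M AM act \<and> openin M V"
  show "let R = action_orbit_rel H M act;
          \<pi> = (\<lambda>x. R `` {x})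
      in \<forall>(D :: 'p::euclidean_space set) P.
           (P ` D \<subseteq> \<pi> ` V \<and> qplot M AM V R D P) \<longleftrightarrow>
           subset_plot (qplot M AM (topspace M) R) (\<pi> ` V) D P"
    using part2[of H AH mul ginv e M AM act V] a by blast
qed

end
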